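(* Let $(\Omega,\mathcal F,\mathbb P)$ be a probability space carrying a group of measurable bijections $\{\theta_n\}_{n\in\mathbb Z}$ ($\theta_n\circ\theta_m=\theta_{n+m}$), each preserving $\mathbb P$. Let $\{a_n\}_{n\in\mathbb Z}$ be i.i.d. random variables with values in $\{1,2,3,\dots\}$, compatible with the flow ($a_n(\omega)=a_0(\theta_n\omega)$), with $\mathbb E[a_0]<\infty$ and $\mathbb P[a_0=1]>0$. Put $f(n)=n+a_n$ and $$N_n=\#\{m\in\mathbb Z:\ m<n,\ f(m)>n\}+1,\qquad n\in\mathbb Z.$$ Let $\Psi^o=\{m\in\mathbb Z: N_m=1\}$. Then $\Psi^o$ is an integer-valued renewal process whose intensity satisfies $$\lambda^o:=\mathbb P[0\in\Psi^o]=\prod_{i=1}^{\infty}\mathbb P[a_0\le i]>0.$$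
   Context: A simple stationary point process (s.s.p.p.) on $\mathbb Z$ is a random subset $\Phi\subset\mathbb Z$ such that the indicator process $U_n=\mathbf 1\{n\in\Phi\}$ is compatible with the flow ($U_n(\omega)=U_0(\theta_n\omega)$) and $\Phi$ is a.s. nonempty. Its points are enumerated as $\cdots<k_{-1}<k_0\le 0<k_1<k_2<\cdots$. Its intensity is $\lambda_\Phi=\mathbb P[0\in\Phi]$, and when $\lambda_\Phi>0$ its Palm probability is $\mathbb P_\Phi[\cdot]=\mathbb P[\cdot\mid 0\in\Phi]$. An s.s.p.p. $\Psi$ is an integer-valued renewal process if $\{k_n-k_{n-1}\}_{n\in\mathbb Z}$ is i.i.d. under $\mathbb P_\Psi$. $N_n$ is interpreted as the number of individuals alive at time $n$ when individual $m$ lives during $[m,m+a_m)$. *)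

theory Defs
  imports "HOL-Probability.Probability"
begin

definition is_flow :: "'a measure \<Rightarrow> (int \<Rightarrow> 'a \<Rightarrow> 'a) \<Rightarrow> bool" where
  "is_flow M \<theta> \<longleftrightarrow>
     (\<forall>n. \<theta> n \<in> M \<rightarrow>\<^sub>M M) \<and>
     (\<forall>n. bij_betw (\<theta> n) (space M) (space M)) \<and>
     (\<forall>n m. \<forall>\<omega>\<in>space M. \<theta> n (\<theta> m \<omega>) = \<theta> (n + m) \<omega>) \<and>
     (\<forall>n. distr M M (\<theta> n) = M)"

definition sspp :: "'a measure \<Rightarrow> (int \<Rightarrow> 'a \<Rightarrow> 'a) \<Rightarrow> ('a \<Rightarrow> int set) \<Rightarrow> bool" where
  "sspp M \<theta> \<Phi> \<longleftrightarrow>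
     (\<forall>n. {\<omega> \<in> space M. n \<in> \<Phi> \<omega>} \<in> sets M) \<and>
     (\<forall>\<omega>\<in>space M. \<forall>n. (n \<in> \<Phi> \<omega>) = (0 \<in> \<Phi> (\<theta> n \<omega>))) \<and>
     (AE \<omega> in M. \<Phi> \<omega> \<noteq> {})"

definition intensity :: "'a measure \<Rightarrow> ('a \<Rightarrow> int set) \<Rightarrow> real" where
  "intensity M \<Phi> = measure M {\<omega> \<in> space M. 0 \<in> \<Phi> \<omega>}"

definition palm :: "'a measure \<Rightarrow> ('a \<Rightarrow> int set) \<Rightarrow> 'a measure" where
  "palm M \<Phi> = uniform_measure M {\<omega> \<in> space M. 0 \<in> \<Phi> \<omega>}"

text \<open>Enumeration of the points ... < k(-1) < k 0 <= 0 < k 1 < ... of a set of integers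
  (defined when such an enumeration exists, i.e. the set is unbounded in both directions;
  otherwise a dummy value 0).\<close>
definition enum_points :: "int set \<Rightarrow> int \<Rightarrow> int" where
  "enum_points S =
     (if \<exists>k::int \<Rightarrow> int. strict_mono k \<and> range k = S \<and> k 0 \<le> 0 \<and> 0 < k 1
      then (THE k::int \<Rightarrow> int. strict_mono k \<and> range k = S \<and> k 0 \<le> 0 \<and> 0 < k 1)
      else (\<lambda>_. 0))"

definition renewal_pp :: "'a measure \<Rightarrow> (int \<Rightarrow> 'a \<Rightarrow> 'a) \<Rightarrow> ('a \<Rightarrow> int set) \<Rightarrow> bool" where
  "renewal_pp M \<theta> \<Psi> \<longleftrightarrow>
     sspp M \<theta> \<Psi> \<and> intensity M \<Psi> > 0 \<and>
     (let P = palm M \<Psi>;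
          D = (\<lambda>n \<omega>. enum_points (\<Psi> \<omega>) n - enum_points (\<Psi> \<omega>) (n - 1))
      in prob_space.indep_vars P (\<lambda>_. count_space UNIV) D UNIV \<and>
         (\<forall>n. distr P (count_space UNIV) (D n) = distr P (count_space UNIV) (D 0)))"

text \<open>Number of individuals alive at time n (individual m lives during [m, m + a m)).\<close>
definition alive_count :: "(int \<Rightarrow> 'a \<Rightarrow> nat) \<Rightarrow> int \<Rightarrow> 'a \<Rightarrow> nat" where
  "alive_count a n \<omega> = card {m. m < n \<and> m + int (a m \<omega>) > n} + 1"

end

theory Submission
  imports Defs
begin


definition Tx :: "(int \<Rightarrow> nat) \<Rightarrow> int \<Rightarrow> bool" where
  "Tx x n \<longleftrightarrow> (\<forall>m<n. m + int (x m) \<le> n)"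

definition Bx :: "(int \<Rightarrow> nat) \<Rightarrow> int \<Rightarrow> int \<Rightarrow> bool" where
  "Bx x u v \<longleftrightarrow> u < v \<and> (\<forall>m. u \<le> m \<and> m < v \<longrightarrow> m + int (x m) \<le> v) \<and>
     (\<forall>w. u < w \<and> w < v \<longrightarrow> (\<exists>m. u \<le> m \<and> m < w \<and> w < m + int (x m)))"

definition Sx :: "(int \<Rightarrow> nat) \<Rightarrow> int \<Rightarrow> int set" where
  "Sx x n = {m. m < n \<and> n < m + int (x m)}"

lemma Sx_empty_iff: "Sx x n = {} \<longleftrightarrow> Tx x n"
  unfolding Sx_def Tx_def by (auto simp: not_less) (meson not_le)

lemma Sx_image: "Sx x n = (\<lambda>i::nat. n - 1 - int i) ` {i. Suc i < x (n - 1 - int i)}"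
proof (rule set_eqI, rule iffI)
  fix m assume "m \<in> Sx x n"
  then have "m < n" "n < m + int (x m)" by (auto simp: Sx_def)
  then show "m \<in> (\<lambda>i::nat. n - 1 - int i) ` {i. Suc i < x (n - 1 - int i)}"
    by (intro image_eqI[of _ _ "nat (n - 1 - m)"]) auto
next
  fix m assume "m \<in> (\<lambda>i::nat. n - 1 - int i) ` {i. Suc i < x (n - 1 - int i)}"
  then show "m \<in> Sx x n" by (auto simp: Sx_def)
qed

lemma Sx_infinite_iff: "infinite (Sx x n) \<longleftrightarrow> (\<forall>i0::nat. \<exists>i\<ge>i0. Suc i < x (n - 1 - int i))"
proof -
  have "inj (\<lambda>i::nat. n - 1 - int i)" by (auto simp: inj_def)
  then have "infinite (Sx x n) \<longleftrightarrow> infinite {i. Suc i < x (n - 1 - int i)}"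
    unfolding Sx_image by (simp add: finite_image_iff inj_on_subset)
  also have "\<dots> \<longleftrightarrow> (\<forall>i0::nat. \<exists>i\<ge>i0. Suc i < x (n - 1 - int i))"
    by (simp add: infinite_nat_iff_unbounded_le)
  finally show ?thesis .
qed

lemma Tx_alt: "Tx x n \<longleftrightarrow> (\<forall>i::nat. x (n - 1 - int i) \<le> Suc i)"
  unfolding Sx_empty_iff[symmetric] Sx_image by (auto simp: not_less)

lemma alive_count_eq: "alive_count a n \<omega> = card (Sx (\<lambda>m. a m \<omega>) n) + 1"
  unfolding alive_count_def Sx_def by simp

lemma alive_one_iff: "alive_count a n \<omega> = 1 \<longleftrightarrow> Tx (\<lambda>m. a m \<omega>) n \<or> infinite (Sx (\<lambda>m. a m \<omega>) n)"
  unfolding alive_count_eq Sx_empty_iff[symmetric] by auto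

locale setting = prob_space M for M :: "'a measure" +
  fixes \<theta> :: "int \<Rightarrow> 'a \<Rightarrow> 'a" and a :: "int \<Rightarrow> 'a \<Rightarrow> nat"
  assumes flow: "is_flow M \<theta>"
    and indep: "indep_vars (\<lambda>_. count_space UNIV) a UNIV"
    and ident: "\<forall>n. distr M (count_space UNIV) (a n) = distr M (count_space UNIV) (a 0)"
    and pos: "\<forall>n. \<forall>\<omega>\<in>space M. a n \<omega> \<ge> 1"
    and compat: "\<forall>n. \<forall>\<omega>\<in>space M. a n \<omega> = a 0 (\<theta> n \<omega>)"
    and integ: "integrable M (\<lambda>\<omega>. real (a 0 \<omega>))"
    and p1: "measure M {\<omega> \<in> space M. a 0 \<omega> = 1} > 0"
begin

definition Psi :: "'a \<Rightarrow> int set" where "Psi \<omega> = {m. alive_count a m \<omega> = 1}"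

lemma a_meas[measurable]: "a n \<in> M \<rightarrow>\<^sub>M count_space UNIV"
proof -
  have "\<forall>i\<in>UNIV. random_variable (count_space UNIV) (a i)"
    using indep unfolding indep_vars_def by (rule conjunct1)
  then show ?thesis by blast
qed

lemma flow1: "\<forall>n. \<theta> n \<in> M \<rightarrow>\<^sub>M M"
  using flow unfolding is_flow_def by (elim conjE)

lemma flow3: "\<forall>n m. \<forall>\<omega>\<in>space M. \<theta> n (\<theta> m \<omega>) = \<theta> (n + m) \<omega>"
  using flow unfolding is_flow_def by (elim conjE)

lemma flow4: "\<forall>n. distr M M (\<theta> n) = M"
  using flow unfolding is_flow_def by (elim conjE)

lemma theta_meas[measurable]: "\<theta> n \<in> M \<rightarrow>\<^sub>M M"
  using flow1 by (rule spec)

lemma theta_space: "\<omega> \<in> space M \<Longrightarrow> \<theta> n \<omega> \<in> space M"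
  by (rule measurable_space[OF theta_meas])

lemma compat': "\<omega> \<in> space M \<Longrightarrow> a n \<omega> = a 0 (\<theta> n \<omega>)"
  using compat by (simp only: Ball_def)

lemma flow_comp: "\<omega> \<in> space M \<Longrightarrow> \<theta> n (\<theta> m \<omega>) = \<theta> (n + m) \<omega>"
  using flow3 by (simp only: Ball_def)

lemma a_shift: "\<omega> \<in> space M \<Longrightarrow> a m (\<theta> n \<omega>) = a (m + n) \<omega>"
proof -
  assume w: "\<omega> \<in> space M"
  have "a m (\<theta> n \<omega>) = a 0 (\<theta> m (\<theta> n \<omega>))" by (rule compat'[OF theta_space[OF w]])
  also have "\<theta> m (\<theta> n \<omega>) = \<theta> (m + n) \<omega>" by (rule flow_comp[OF w])
  also have "a 0 (\<theta> (m + n) \<omega>) = a (m + n) \<omega>" by (rule compat'[OF w, symmetric])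
  finally show ?thesis .
qed

lemma measure_shift: "E \<in> sets M \<Longrightarrow> measure M {\<omega> \<in> space M. \<theta> n \<omega> \<in> E} = measure M E"
proof -
  assume E: "E \<in> sets M"
  have d: "distr M M (\<theta> n) = M" using flow4 by (rule spec)
  have "measure M E = measure (distr M M (\<theta> n)) E" by (simp only: d)
  also have "\<dots> = measure M (\<theta> n -` E \<inter> space M)" using E by (simp add: measure_distr)
  also have "\<theta> n -` E \<inter> space M = {\<omega> \<in> space M. \<theta> n \<omega> \<in> E}" by auto
  finally show ?thesis by simp
qed

lemma pred_K: "Measurable.pred M (\<lambda>x. (K::bool))"
  by (cases K) (simp_all add: pred_def)

lemma pred_a: "Measurable.pred M (\<lambda>\<omega>. (P::nat\<Rightarrow>bool) (a n \<omega>))"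
proof -
  have "a n -` {x. P x} \<inter> space M \<in> sets M" by (rule measurable_sets[OF a_meas]) auto
  moreover have "{x\<in>space M. P (a n x)} = a n -` {x. P x} \<inter> space M" by auto
  ultimately show ?thesis unfolding pred_def by (simp only:)
qed

lemma pred_a_le[measurable]: "Measurable.pred M (\<lambda>\<omega>. a n \<omega> \<le> c)"
  using pred_a[where P="\<lambda>k. k \<le> c"] by (simp only:)
lemma pred_a_gt[measurable]: "Measurable.pred M (\<lambda>\<omega>. c < a n \<omega>)"
  using pred_a[where P="\<lambda>k. c < k"] by (simp only:)
lemma pred_a_int_le[measurable]: "Measurable.pred M (\<lambda>\<omega>. m + int (a n \<omega>) \<le> v)"
  using pred_a[where P="\<lambda>k. m + int k \<le> v"] by (simp only:)
lemma pred_a_int_gt[measurable]: "Measurable.pred M (\<lambda>\<omega>. w < m + int (a n \<omega>))"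
  using pred_a[where P="\<lambda>k. w < m + int k"] by (simp only:)

lemma pred_Tx[measurable]: "Measurable.pred M (\<lambda>\<omega>. Tx (\<lambda>m. a m \<omega>) n)"
  unfolding Tx_alt by (rule pred_intros_countable, rule pred_a_le)

lemma pred_Sx_inf[measurable]: "Measurable.pred M (\<lambda>\<omega>. infinite (Sx (\<lambda>m. a m \<omega>) n))"
proof -
  have "Measurable.pred M (\<lambda>\<omega>. \<forall>i0::nat. \<exists>i. i0 \<le> i \<and> Suc i < a (n - 1 - int i) \<omega>)"
  proof -
    have A: "Measurable.pred M (\<lambda>\<omega>. Suc i < a (n - 1 - int i) \<omega>)" for i by (rule pred_a_gt)
    have B: "Measurable.pred M (\<lambda>\<omega>. i0 \<le> i \<and> Suc i < a (n - 1 - int i) \<omega>)" for i0 i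
      by (rule pred_intros_logic(3)[OF pred_K A])
    have C: "Measurable.pred M (\<lambda>\<omega>. \<exists>i. i0 \<le> i \<and> Suc i < a (n - 1 - int i) \<omega>)" for i0
      by (rule pred_intros_countable(2)[OF B])
    show ?thesis by (rule pred_intros_countable(1)[OF C])
  qed
  moreover have "(\<lambda>\<omega>. infinite (Sx (\<lambda>m. a m \<omega>) n)) = (\<lambda>\<omega>. \<forall>i0::nat. \<exists>i. i0 \<le> i \<and> Suc i < a (n - 1 - int i) \<omega>)"
    by (rule ext, rule Sx_infinite_iff)
  ultimately show ?thesis by (simp only:)
qed

lemma pred_Psi[measurable]: "Measurable.pred M (\<lambda>\<omega>. n \<in> Psi \<omega>)"
  unfolding Psi_def mem_Collect_eq alive_one_iff by (rule pred_intros_logic(5), rule pred_Tx, rule pred_Sx_inf)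

lemma pred_Bx[measurable]: "Measurable.pred M (\<lambda>\<omega>. Bx (\<lambda>m. a m \<omega>) u v)"
  unfolding Bx_def
  by (intro pred_intros_logic(3) pred_intros_countable(1) pred_intros_countable(2) pred_intros_logic(4) pred_K pred_a_int_le pred_a_int_gt)

end



lemma sum_ind_le: "(\<Sum>i<N. (if i < k then 1 else 0 :: real)) = real (min N k)"
  by (induction N) (auto simp: min_def)

lemma Tx_shift: "Tx (\<lambda>m. x (m + N)) n \<longleftrightarrow> Tx x (n + N)"
proof
  assume h: "Tx (\<lambda>m. x (m + N)) n"
  show "Tx x (n + N)" unfolding Tx_def
  proof (intro allI impI)
    fix m assume "m < n + N"
    then have "m - N < n" by simp
    then have "m - N + int (x (m - N + N)) \<le> n" using h unfolding Tx_def by blast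
    then show "m + int (x m) \<le> n + N" by simp
  qed
next
  assume h: "Tx x (n + N)"
  show "Tx (\<lambda>m. x (m + N)) n" unfolding Tx_def
  proof (intro allI impI)
    fix m assume "m < n"
    then have "m + N < n + N" by simp
    then have "m + N + int (x (m + N)) \<le> n + N" using h unfolding Tx_def by blast
    then show "m + int (x (m + N)) \<le> n" by simp
  qed
qed

context setting
begin

abbreviation T :: "int \<Rightarrow> 'a \<Rightarrow> bool" where "T n \<omega> \<equiv> Tx (\<lambda>m. a m \<omega>) n"

lemma null_AE:
  assumes "N \<in> sets M" "measure M N = 0" "\<And>\<omega>. \<omega> \<in> space M \<Longrightarrow> \<not> P \<omega> \<Longrightarrow> \<omega> \<in> N"
  shows "AE \<omega> in M. P \<omega>"
proof -
  have "N \<in> null_sets M" using assms(1,2) by (intro null_setsI) (simp add: emeasure_eq_measure)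
  then show ?thesis by (rule AE_I') (use assms(3) in blast)
qed

lemma a_ident: "measure M {\<omega>\<in>space M. P (a k \<omega>)} = measure M {\<omega>\<in>space M. P (a 0 \<omega>)}"
proof -
  have d: "distr M (count_space UNIV) (a k) = distr M (count_space UNIV) (a 0)" using ident by (rule spec)
  have "measure M {\<omega>\<in>space M. P (a k \<omega>)} = measure M (a k -` {x. P x} \<inter> space M)"
    by (rule arg_cong[where f="measure M"]) blast
  also have "\<dots> = measure (distr M (count_space UNIV) (a k)) {x. P x}"
    by (rule measure_distr[symmetric]) auto
  also have "\<dots> = measure (distr M (count_space UNIV) (a 0)) {x. P x}" by (simp only: d)
  also have "\<dots> = measure M (a 0 -` {x. P x} \<inter> space M)"
    by (rule measure_distr) auto
  also have "\<dots> = measure M {\<omega>\<in>space M. P (a 0 \<omega>)}"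
    by (rule arg_cong[where f="measure M"]) blast
  finally show ?thesis .
qed

lemma sets_a: "{\<omega>\<in>space M. P (a k \<omega>)} \<in> sets M"
  using pred_a[where P=P and n=k] unfolding pred_def .

lemma r_summable: "summable (\<lambda>i::nat. measure M {\<omega>\<in>space M. i < a 0 \<omega>})"
proof (rule summableI_nonneg_bounded[where x="expectation (\<lambda>\<omega>. real (a 0 \<omega>))"])
  fix N :: nat
  have "(\<Sum>i<N. measure M {\<omega>\<in>space M. i < a 0 \<omega>}) =
        (\<Sum>i<N. expectation (indicator {\<omega>\<in>space M. i < a 0 \<omega>}))"
    by (intro sum.cong refl) (simp add: Int_absorb2)
  also have "\<dots> = expectation (\<lambda>\<omega>. \<Sum>i<N. indicator {\<omega>\<in>space M. i < a 0 \<omega>} \<omega>)"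
    by (subst Bochner_Integration.integral_sum) (auto intro!: integrable_real_indicator sets_a simp: emeasure_eq_measure)
  also have "\<dots> \<le> expectation (\<lambda>\<omega>. real (a 0 \<omega>))"
  proof (rule integral_mono)
    show "integrable M (\<lambda>\<omega>. \<Sum>i<N. indicator {\<omega>\<in>space M. i < a 0 \<omega>} \<omega> :: real)"
      by (rule Bochner_Integration.integrable_sum) (auto intro!: integrable_real_indicator sets_a simp: emeasure_eq_measure)
    show "integrable M (\<lambda>\<omega>. real (a 0 \<omega>))" by (rule integ)
    fix \<omega> assume w: "\<omega> \<in> space M"
    have "(\<Sum>i<N. indicator {\<omega>\<in>space M. i < a 0 \<omega>} \<omega> :: real) = (\<Sum>i<N. (if i < a 0 \<omega> then 1 else 0))"
      using w by (intro sum.cong refl) (simp add: indicator_def)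
    also have "\<dots> = real (min N (a 0 \<omega>))" by (rule sum_ind_le)
    also have "\<dots> \<le> real (a 0 \<omega>)" by simp
    finally show "(\<Sum>i<N. indicator {\<omega>\<in>space M. i < a 0 \<omega>} \<omega> :: real) \<le> real (a 0 \<omega>)" .
  qed
  finally show "(\<Sum>i<N. measure M {\<omega>\<in>space M. i < a 0 \<omega>}) \<le> expectation (\<lambda>\<omega>. real (a 0 \<omega>))" .
qed simp

lemma AE_finite_S: "AE \<omega> in M. finite (Sx (\<lambda>m. a m \<omega>) n)"
proof -
  define r where "r i = measure M {\<omega>\<in>space M. i < a 0 \<omega>}" for i :: nat
  have rs: "summable r" unfolding r_def by (rule r_summable)
  define I where "I = {\<omega>\<in>space M. infinite (Sx (\<lambda>m. a m \<omega>) n)}"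
  have I_sets: "I \<in> sets M" unfolding I_def using pred_Sx_inf[of n] unfolding pred_def .
  have bound: "measure M I \<le> (\<Sum>j. r (j + Suc i0))" for i0 :: nat
  proof -
    define A where "A j = {\<omega>\<in>space M. Suc (j + i0) < a (n - 1 - int (j + i0)) \<omega>}" for j
    have A_sets: "range A \<subseteq> sets M" unfolding A_def using sets_a by blast
    have mA: "measure M (A j) = r (j + Suc i0)" for j
      unfolding A_def r_def by (subst a_ident) simp
    have sumA: "summable (\<lambda>j. measure M (A j))" unfolding mA
      using summable_ignore_initial_segment[OF rs] .
    have "I \<subseteq> (\<Union>j. A j)"
    proof
      fix \<omega> assume "\<omega> \<in> I"
      then have w: "\<omega> \<in> space M" and inf: "infinite (Sx (\<lambda>m. a m \<omega>) n)" unfolding I_def by auto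
      from inf obtain i where "i \<ge> i0" "Suc i < a (n - 1 - int i) \<omega>"
        unfolding Sx_infinite_iff by blast
      then show "\<omega> \<in> (\<Union>j. A j)" using w unfolding A_def
        by (intro UN_I[of "i - i0"]) auto
    qed
    then have "measure M I \<le> measure M (\<Union>j. A j)"
      using A_sets by (intro finite_measure_mono) auto
    also have "\<dots> \<le> (\<Sum>j. measure M (A j))"
      by (rule finite_measure_subadditive_countably[OF A_sets sumA])
    finally show ?thesis unfolding mA .
  qed
  have lim: "(\<lambda>i0. \<Sum>j. r (j + Suc i0)) \<longlonglongrightarrow> 0"
  proof -
    have "(\<lambda>i0. \<Sum>j. r (j + i0)) \<longlonglongrightarrow> 0" using suminf_exist_split2[OF rs] by simp
    then have "(\<lambda>i0. \<Sum>j. r (j + Suc i0)) \<longlonglongrightarrow> 0"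
      using LIMSEQ_Suc by fastforce
    then show ?thesis .
  qed
  have "measure M I \<le> 0"
    by (rule LIMSEQ_le_const[OF lim]) (use bound in blast)
  then have "measure M I = 0" using measure_nonneg[of M I] by linarith
  then show ?thesis
    by (rule null_AE[OF I_sets]) (auto simp: I_def)
qed

lemma AE_Psi_eq: "AE \<omega> in M. \<forall>n. (n \<in> Psi \<omega>) = T n \<omega>"
proof -
  have "AE \<omega> in M. \<forall>n. finite (Sx (\<lambda>m. a m \<omega>) n)"
    using AE_finite_S by (subst AE_all_countable) blast
  then show ?thesis
    by eventually_elim (simp only: Psi_def mem_Collect_eq alive_one_iff, blast)
qed

lemma T_shift: "\<omega> \<in> space M \<Longrightarrow> T n (\<theta> N \<omega>) = T (n + N) \<omega>"
proof -
  assume w: "\<omega> \<in> space M"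
  have "(\<lambda>m. a m (\<theta> N \<omega>)) = (\<lambda>m. a (m + N) \<omega>)" using a_shift[OF w] by (intro ext) 
  then show ?thesis using Tx_shift[of "\<lambda>m. a m \<omega>" N n] by simp
qed

end



context setting
begin

lemma stationary_union_null:
  assumes sets: "\<And>k. A k \<in> sets M" and inc: "incseq A"
    and eq: "\<And>k. measure M (A k) = measure M (A 0)"
  shows "measure M ((\<Union>k. A k) - A 0) = 0"
proof -
  have l1: "(\<lambda>k. measure M (A k)) \<longlonglongrightarrow> measure M (\<Union>k. A k)"
    by (rule finite_Lim_measure_incseq) (use sets inc in auto)
  have e: "(\<lambda>k. measure M (A k)) = (\<lambda>k. measure M (A 0))" by (rule ext) (rule eq)
  have l2: "(\<lambda>k. measure M (A k)) \<longlonglongrightarrow> measure M (A 0)"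
    unfolding e by (rule tendsto_const)
  have u: "measure M (\<Union>k. A k) = measure M (A 0)" by (rule LIMSEQ_unique[OF l1 l2])
  have "measure M ((\<Union>k. A k) - A 0) = measure M (\<Union>k. A k) - measure M (A 0)"
    by (rule finite_measure_Diff) (use sets in auto)
  then show ?thesis using u by simp
qed

lemma pred_forall_T:
  "Measurable.pred M (\<lambda>\<omega>. \<forall>n. R n \<longrightarrow> \<not> T n \<omega>)"
  by (intro pred_intros_countable(1) pred_intros_logic(4) pred_intros_logic(2) pred_K pred_Tx)

lemma AE_unbounded_above: "AE \<omega> in M. T 0 \<omega> \<longrightarrow> (\<forall>N. \<exists>n\<ge>N. T n \<omega>)"
proof -
  define H where "H N = {\<omega>\<in>space M. \<forall>n. N \<le> n \<longrightarrow> \<not> T n \<omega>}" for N :: int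
  have Hs: "H N \<in> sets M" for N unfolding H_def using pred_forall_T[of "\<lambda>n. N \<le> n"] unfolding pred_def .
  have Hshift: "H N = {\<omega>\<in>space M. \<theta> N \<omega> \<in> H 0}" for N
  proof (rule set_eqI, rule iffI)
    fix \<omega> assume "\<omega> \<in> H N"
    then have w: "\<omega> \<in> space M" and h: "\<forall>n. N \<le> n \<longrightarrow> \<not> T n \<omega>" unfolding H_def by auto
    have "\<forall>n. 0 \<le> n \<longrightarrow> \<not> T n (\<theta> N \<omega>)" unfolding T_shift[OF w] using h by simp
    then show "\<omega> \<in> {\<omega>\<in>space M. \<theta> N \<omega> \<in> H 0}" using w theta_space[OF w] unfolding H_def by simp
  next
    fix \<omega> assume "\<omega> \<in> {\<omega>\<in>space M. \<theta> N \<omega> \<in> H 0}"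
    then have w: "\<omega> \<in> space M" and h: "\<forall>n. 0 \<le> n \<longrightarrow> \<not> T n (\<theta> N \<omega>)" unfolding H_def by auto
    have "\<forall>n. N \<le> n \<longrightarrow> \<not> T n \<omega>"
    proof (intro allI impI)
      fix n assume "N \<le> n"
      then have "\<not> T (n - N) (\<theta> N \<omega>)" using h by simp
      then show "\<not> T n \<omega>" unfolding T_shift[OF w] by simp
    qed
    then show "\<omega> \<in> H N" using w unfolding H_def by simp
  qed
  have Heq: "measure M (H N) = measure M (H 0)" for N
    unfolding Hshift[of N] by (rule measure_shift[OF Hs])
  define A where "A k = H (int k)" for k
  have "measure M ((\<Union>k. A k) - A 0) = 0"
  proof (rule stationary_union_null)
    show "A k \<in> sets M" for k unfolding A_def by (rule Hs)
    show "incseq A" unfolding A_def H_def incseq_def by auto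
    show "measure M (A k) = measure M (A 0)" for k unfolding A_def using Heq[of "int k"] by simp
  qed
  then show ?thesis
  proof (rule null_AE[rotated])
    show "(\<Union>k. A k) - A 0 \<in> sets M" using Hs unfolding A_def by auto
    fix \<omega> assume w: "\<omega> \<in> space M" and nh: "\<not> (T 0 \<omega> \<longrightarrow> (\<forall>N. \<exists>n\<ge>N. T n \<omega>))"
    then obtain N where t0: "T 0 \<omega>" and hN: "\<forall>n\<ge>N. \<not> T n \<omega>" by auto
    have "\<omega> \<in> A (nat N)" unfolding A_def H_def using w hN by auto
    moreover have "\<omega> \<notin> A 0" unfolding A_def H_def using t0 by auto
    ultimately show "\<omega> \<in> (\<Union>k. A k) - A 0" by blast
  qed
qed

lemma AE_unbounded_below: "AE \<omega> in M. T 0 \<omega> \<longrightarrow> (\<forall>N. \<exists>n\<le>N. T n \<omega>)"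
proof -
  define H where "H N = {\<omega>\<in>space M. \<forall>n. n \<le> N \<longrightarrow> \<not> T n \<omega>}" for N :: int
  have Hs: "H N \<in> sets M" for N unfolding H_def using pred_forall_T[of "\<lambda>n. n \<le> N"] unfolding pred_def .
  have Hshift: "H N = {\<omega>\<in>space M. \<theta> N \<omega> \<in> H 0}" for N
  proof (rule set_eqI, rule iffI)
    fix \<omega> assume "\<omega> \<in> H N"
    then have w: "\<omega> \<in> space M" and h: "\<forall>n. n \<le> N \<longrightarrow> \<not> T n \<omega>" unfolding H_def by auto
    have "\<forall>n. n \<le> 0 \<longrightarrow> \<not> T n (\<theta> N \<omega>)" unfolding T_shift[OF w] using h by simp
    then show "\<omega> \<in> {\<omega>\<in>space M. \<theta> N \<omega> \<in> H 0}" using w theta_space[OF w] unfolding H_def by simp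
  next
    fix \<omega> assume "\<omega> \<in> {\<omega>\<in>space M. \<theta> N \<omega> \<in> H 0}"
    then have w: "\<omega> \<in> space M" and h: "\<forall>n. n \<le> 0 \<longrightarrow> \<not> T n (\<theta> N \<omega>)" unfolding H_def by auto
    have "\<forall>n. n \<le> N \<longrightarrow> \<not> T n \<omega>"
    proof (intro allI impI)
      fix n assume "n \<le> N"
      then have "\<not> T (n - N) (\<theta> N \<omega>)" using h by simp
      then show "\<not> T n \<omega>" unfolding T_shift[OF w] by simp
    qed
    then show "\<omega> \<in> H N" using w unfolding H_def by simp
  qed
  have Heq: "measure M (H N) = measure M (H 0)" for N
    unfolding Hshift[of N] by (rule measure_shift[OF Hs])
  define A where "A k = H (- int k)" for k
  have "measure M ((\<Union>k. A k) - A 0) = 0"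
  proof (rule stationary_union_null)
    show "A k \<in> sets M" for k unfolding A_def by (rule Hs)
    show "incseq A" unfolding A_def H_def incseq_def by auto
    show "measure M (A k) = measure M (A 0)" for k unfolding A_def using Heq[of "- int k"] by simp
  qed
  then show ?thesis
  proof (rule null_AE[rotated])
    show "(\<Union>k. A k) - A 0 \<in> sets M" using Hs unfolding A_def by auto
    fix \<omega> assume w: "\<omega> \<in> space M" and nh: "\<not> (T 0 \<omega> \<longrightarrow> (\<forall>N. \<exists>n\<le>N. T n \<omega>))"
    then obtain N where t0: "T 0 \<omega>" and hN: "\<forall>n\<le>N. \<not> T n \<omega>" by auto
    have "\<omega> \<in> A (nat (- N))" unfolding A_def H_def using w hN by auto
    moreover have "\<omega> \<notin> A 0" unfolding A_def H_def using t0 by auto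
    ultimately show "\<omega> \<in> (\<Union>k. A k) - A 0" by blast
  qed
qed

lemma indep_a_prod:
  assumes "finite J" "J \<noteq> {}"
  shows "prob {\<omega>\<in>space M. \<forall>j\<in>J. a j \<omega> \<in> F j} = (\<Prod>j\<in>J. prob {\<omega>\<in>space M. a j \<omega> \<in> F j})"
proof -
  have isd: "indep_sets (\<lambda>i. {a i -` A \<inter> space M | A. A \<in> sets (count_space UNIV)}) UNIV"
    using indep unfolding indep_vars_def2 by (rule conjunct2)
  define B where "B j = a j -` F j \<inter> space M" for j
  have "B \<in> Pi J (\<lambda>i. {a i -` A \<inter> space M | A. A \<in> sets (count_space UNIV)})"
    unfolding B_def by auto
  then have "prob (\<Inter>j\<in>J. B j) = (\<Prod>j\<in>J. prob (B j))"
    using isd assms unfolding indep_sets_def by blast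
  moreover have "(\<Inter>j\<in>J. B j) = {\<omega>\<in>space M. \<forall>j\<in>J. a j \<omega> \<in> F j}"
    using assms(2) unfolding B_def by auto
  moreover have "B j = {\<omega>\<in>space M. a j \<omega> \<in> F j}" for j unfolding B_def by auto
  ultimately show ?thesis by simp
qed

definition lam :: real where "lam = prob {\<omega>\<in>space M. T 0 \<omega>}"

lemma sets_T: "{\<omega>\<in>space M. T n \<omega>} \<in> sets M"
  using pred_Tx[of n] unfolding pred_def .

lemma prod_tendsto: "(\<lambda>N. \<Prod>i\<le>N. prob {\<omega>\<in>space M. a 0 \<omega> \<le> Suc i}) \<longlonglongrightarrow> lam"
proof -
  define W where "W N = {\<omega>\<in>space M. \<forall>i\<le>N. a (- 1 - int i) \<omega> \<le> Suc i}" for N :: nat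
  have Ws: "W N \<in> sets M" for N
  proof -
    have "Measurable.pred M (\<lambda>\<omega>. \<forall>i. i \<le> N \<longrightarrow> a (- 1 - int i) \<omega> \<le> Suc i)"
      by (intro pred_intros_countable(1) pred_intros_logic(4) pred_K pred_a_le)
    then show ?thesis unfolding W_def pred_def by simp
  qed
  have WP: "prob (W N) = (\<Prod>i\<le>N. prob {\<omega>\<in>space M. a 0 \<omega> \<le> Suc i})" for N
  proof -
    define g where "g i = - 1 - int i" for i :: nat
    have inj: "inj_on g {..N}" unfolding g_def inj_on_def by auto
    define F where "F j = {k. k \<le> Suc (nat (- 1 - j))}" for j :: int
    have "W N = {\<omega>\<in>space M. \<forall>j\<in>g ` {..N}. a j \<omega> \<in> F j}"
      unfolding W_def F_def g_def by auto
    then have "prob (W N) = (\<Prod>j\<in>g ` {..N}. prob {\<omega>\<in>space M. a j \<omega> \<in> F j})"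
      using indep_a_prod[of "g ` {..N}" F] by simp
    also have "\<dots> = (\<Prod>i\<le>N. prob {\<omega>\<in>space M. a (g i) \<omega> \<in> F (g i)})"
      by (rule prod.reindex[OF inj, unfolded comp_def])
    also have "\<dots> = (\<Prod>i\<le>N. prob {\<omega>\<in>space M. a 0 \<omega> \<le> Suc i})"
    proof (rule prod.cong[OF refl])
      fix i assume "i \<in> {..N}"
      have "prob {\<omega>\<in>space M. a (g i) \<omega> \<in> F (g i)} = prob {\<omega>\<in>space M. a (g i) \<omega> \<le> Suc i}"
        unfolding F_def g_def by simp
      also have "\<dots> = prob {\<omega>\<in>space M. a 0 \<omega> \<le> Suc i}" by (rule a_ident)
      finally show "prob {\<omega>\<in>space M. a (g i) \<omega> \<in> F (g i)} = prob {\<omega>\<in>space M. a 0 \<omega> \<le> Suc i}" .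
    qed
    finally show ?thesis .
  qed
  have "(\<lambda>N. prob (W N)) \<longlonglongrightarrow> prob (\<Inter>N. W N)"
    by (rule finite_Lim_measure_decseq) (use Ws in \<open>auto simp: decseq_def W_def\<close>)
  moreover have "(\<Inter>N. W N) = {\<omega>\<in>space M. T 0 \<omega>}"
    unfolding W_def Tx_alt by auto
  ultimately show ?thesis unfolding WP lam_def by simp
qed

lemma lam_pos: "lam > 0"
proof -
  define f where "f i = prob {\<omega>\<in>space M. a 0 \<omega> \<le> Suc i}" for i :: nat
  have p1': "prob {\<omega>\<in>space M. a 0 \<omega> = 1} > 0" using p1 .
  have fpos: "f i > 0" for i
  proof -
    have "prob {\<omega>\<in>space M. a 0 \<omega> = 1} \<le> f i"
      unfolding f_def by (rule finite_measure_mono) (auto intro: sets_a)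
    then show ?thesis using p1' by linarith
  qed
  have f1: "norm (f i - 1) = prob {\<omega>\<in>space M. Suc i < a 0 \<omega>}" for i
  proof -
    have "space M - {\<omega>\<in>space M. a 0 \<omega> \<le> Suc i} = {\<omega>\<in>space M. Suc i < a 0 \<omega>}" by auto
    then have "prob {\<omega>\<in>space M. Suc i < a 0 \<omega>} = 1 - f i"
      unfolding f_def using prob_compl[OF sets_a[of "\<lambda>k. k \<le> Suc i" 0]] by simp
    moreover have "f i \<le> 1" unfolding f_def by simp
    ultimately show ?thesis by simp
  qed
  have "summable (\<lambda>i. prob {\<omega>\<in>space M. i + 1 < a 0 \<omega>})"
    using summable_ignore_initial_segment[OF r_summable, of 1] by simp
  then have "summable (\<lambda>i. norm (f i - 1))" unfolding f1 by simp
  then have "convergent_prod f"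
    by (intro abs_convergent_prod_imp_convergent_prod summable_imp_abs_convergent_prod)
  then obtain L where L: "(\<lambda>n. \<Prod>i\<le>n. f i) \<longlonglongrightarrow> L" "L \<noteq> 0"
    using convergent_prod_iff_nz_lim[of f] fpos by (metis less_irrefl)
  have "L = lam" using LIMSEQ_unique[OF L(1) prod_tendsto[folded f_def]] .
  moreover have "lam \<ge> 0" unfolding lam_def by simp
  ultimately show ?thesis using L(2) by simp
qed

lemma lam_has_prod: "(\<lambda>i. prob {\<omega>\<in>space M. a 0 \<omega> \<le> Suc i}) has_prod lam"
  unfolding has_prod_def raw_has_prod_def using prod_tendsto lam_pos by simp

end



lemma pred_K_gen: "Measurable.pred N (\<lambda>x. (K::bool))"
  by (cases K) (simp_all add: pred_def)

lemma pred_gen: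
  assumes f: "f \<in> N \<rightarrow>\<^sub>M count_space UNIV"
  shows "Measurable.pred N (\<lambda>\<omega>. (P::nat\<Rightarrow>bool) (f \<omega>))"
proof -
  have "f -` {x. P x} \<inter> space N \<in> sets N" by (rule measurable_sets[OF f]) auto
  moreover have "{x\<in>space N. P (f x)} = f -` {x. P x} \<inter> space N" by auto
  ultimately show ?thesis unfolding pred_def by (simp only:)
qed

lemma pred_gen_le:
  fixes f :: "'b \<Rightarrow> nat" assumes "f \<in> N \<rightarrow>\<^sub>M count_space UNIV"
  shows "Measurable.pred N (\<lambda>\<omega>. f \<omega> \<le> c)"
  using pred_gen[OF assms, where P="\<lambda>k. k \<le> c"] by (simp only:)
lemma pred_gen_int_le:
  fixes f :: "'b \<Rightarrow> nat" assumes "f \<in> N \<rightarrow>\<^sub>M count_space UNIV"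
  shows "Measurable.pred N (\<lambda>\<omega>. m + int (f \<omega>) \<le> v)"
  using pred_gen[OF assms, where P="\<lambda>k. m + int k \<le> v"] by (simp only:)
lemma pred_gen_int_gt:
  fixes f :: "'b \<Rightarrow> nat" assumes "f \<in> N \<rightarrow>\<^sub>M count_space UNIV"
  shows "Measurable.pred N (\<lambda>\<omega>. w < m + int (f \<omega>))"
  using pred_gen[OF assms, where P="\<lambda>k. w < m + int k"] by (simp only:)

lemma pred_Tx_gen:
  assumes f: "\<And>m. f m \<in> N \<rightarrow>\<^sub>M count_space UNIV"
  shows "Measurable.pred N (\<lambda>\<omega>. Tx (\<lambda>m. f m \<omega>) n)"
  unfolding Tx_alt by (rule pred_intros_countable, rule pred_gen_le[OF f])

lemma pred_Bx_gen:
  assumes f: "\<And>m. f m \<in> N \<rightarrow>\<^sub>M count_space UNIV"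
  shows "Measurable.pred N (\<lambda>\<omega>. Bx (\<lambda>m. f m \<omega>) u v)"
  unfolding Bx_def
  by (intro pred_intros_logic(3) pred_intros_countable(1) pred_intros_countable(2) pred_intros_logic(4)
      pred_K_gen pred_gen_int_le[OF f] pred_gen_int_gt[OF f])

abbreviation PU :: "(int \<Rightarrow> nat) measure" where "PU \<equiv> PiM UNIV (\<lambda>_::int. count_space (UNIV::nat set))"

lemma comp_PU: "(\<lambda>z. z m) \<in> PU \<rightarrow>\<^sub>M count_space UNIV"
  by (rule measurable_component_singleton) simp

lemma Tx_local: "(\<And>m. m < n \<Longrightarrow> x m = y m) \<Longrightarrow> Tx x n = Tx y n"
  unfolding Tx_def by auto

lemma Bx_local: "(\<And>m. u \<le> m \<Longrightarrow> m < v \<Longrightarrow> x m = y m) \<Longrightarrow> Bx x u v = Bx y u v"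
  unfolding Bx_def by (intro conj_cong refl all_cong imp_cong ex_cong) auto

context prob_space
begin

lemma indep_vars_prod:
  assumes "indep_vars M' X L" "finite L" "L \<noteq> {}" "\<And>j. j \<in> L \<Longrightarrow> B j \<in> sets (M' j)"
  shows "prob {\<omega>\<in>space M. \<forall>j\<in>L. X j \<omega> \<in> B j} = (\<Prod>j\<in>L. prob {\<omega>\<in>space M. X j \<omega> \<in> B j})"
proof -
  have isd: "indep_sets (\<lambda>i. {X i -` A \<inter> space M | A. A \<in> sets (M' i)}) L"
    using assms(1) unfolding indep_vars_def2 by (rule conjunct2)
  define C where "C j = X j -` B j \<inter> space M" for j
  have "C \<in> Pi L (\<lambda>i. {X i -` A \<inter> space M | A. A \<in> sets (M' i)})"
    unfolding C_def using assms(4) by auto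
  then have "prob (\<Inter>j\<in>L. C j) = (\<Prod>j\<in>L. prob (C j))"
    using isd assms(2,3) unfolding indep_sets_def by blast
  moreover have "(\<Inter>j\<in>L. C j) = {\<omega>\<in>space M. \<forall>j\<in>L. X j \<omega> \<in> B j}"
    using assms(3) unfolding C_def by auto
  moreover have "C j = {\<omega>\<in>space M. X j \<omega> \<in> B j}" for j unfolding C_def by auto
  ultimately show ?thesis by simp
qed

end

context setting
begin

lemma indep_blocks:
  assumes L: "finite L" "L \<noteq> {}" and disj: "disjoint_family_on K L"
    and P: "\<And>j. j \<in> L \<Longrightarrow> Measurable.pred PU (P j)"
  shows "prob {\<omega>\<in>space M. \<forall>j\<in>L. P j (\<lambda>m. if m \<in> K j then a m \<omega> else 1)} =
         (\<Prod>j\<in>L. prob {\<omega>\<in>space M. P j (\<lambda>m. if m \<in> K j then a m \<omega> else 1)})"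
proof -
  define Y where "Y j \<omega> = restrict (\<lambda>i. a i \<omega>) (K j)" for j \<omega>
  have ind: "indep_vars (\<lambda>j. PiM (K j) (\<lambda>_. count_space UNIV)) Y L"
    unfolding Y_def by (rule indep_vars_restrict[OF indep]) (use disj in auto)
  define ext where "ext j y = (\<lambda>m. if m \<in> K j then y m else (1::nat))" for j and y :: "int \<Rightarrow> nat"
  have ext_meas: "ext j \<in> PiM (K j) (\<lambda>_. count_space UNIV) \<rightarrow>\<^sub>M PU" for j
  proof -
    have "(\<lambda>y m. if m \<in> K j then y m else (1::nat)) \<in> PiM (K j) (\<lambda>_. count_space UNIV) \<rightarrow>\<^sub>M PU"
    proof (rule measurable_PiM_single')
      fix m :: int
      show "(\<lambda>y. if m \<in> K j then y m else (1::nat)) \<in> PiM (K j) (\<lambda>_. count_space UNIV) \<rightarrow>\<^sub>M count_space UNIV"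
      proof (cases "m \<in> K j")
        case True
        then show ?thesis using measurable_component_singleton[OF True, of "\<lambda>_. count_space UNIV"] by simp
      qed simp
    qed (auto simp: space_PiM)
    then show ?thesis unfolding ext_def .
  qed
  define Q where "Q j = ext j -` {z. P j z} \<inter> space (PiM (K j) (\<lambda>_. count_space UNIV))" for j
  have Qs: "Q j \<in> sets (PiM (K j) (\<lambda>_. count_space UNIV))" if "j \<in> L" for j
  proof -
    have "{z \<in> space PU. P j z} \<in> sets PU" using P[OF that] unfolding pred_def .
    then have "ext j -` {z \<in> space PU. P j z} \<inter> space (PiM (K j) (\<lambda>_. count_space UNIV)) \<in> sets (PiM (K j) (\<lambda>_. count_space UNIV))"
      by (rule measurable_sets[OF ext_meas])
    moreover have "{z \<in> space PU. P j z} = {z. P j z}" by (auto simp: space_PiM)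
    ultimately show ?thesis unfolding Q_def by simp
  qed
  have YQ: "(Y j \<omega> \<in> Q j) = P j (\<lambda>m. if m \<in> K j then a m \<omega> else 1)" for j \<omega>
  proof -
    have "ext j (Y j \<omega>) = (\<lambda>m. if m \<in> K j then a m \<omega> else 1)"
      unfolding ext_def Y_def by auto
    moreover have "Y j \<omega> \<in> space (PiM (K j) (\<lambda>_. count_space UNIV))"
      unfolding Y_def by (auto simp: space_PiM)
    ultimately show ?thesis unfolding Q_def by simp
  qed
  have "prob {\<omega>\<in>space M. \<forall>j\<in>L. Y j \<omega> \<in> Q j} = (\<Prod>j\<in>L. prob {\<omega>\<in>space M. Y j \<omega> \<in> Q j})"
    by (rule indep_vars_prod[OF ind L]) (rule Qs)
  then show ?thesis unfolding YQ .
qed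

lemma AE_nonempty: "AE \<omega> in M. \<exists>n. T n \<omega>"
proof -
  define E0 where "E0 = {\<omega>\<in>space M. \<exists>N::int. \<forall>n\<le>N. \<not> T n \<omega>}"
  define TK where "TK K = {\<omega>\<in>space M. \<forall>m. - int K \<le> m \<and> m < 0 \<longrightarrow> m + int (a m \<omega>) \<le> 0}" for K :: nat
  have E0s: "E0 \<in> sets M"
  proof -
    have "Measurable.pred M (\<lambda>\<omega>. \<exists>N::int. \<forall>n. n \<le> N \<longrightarrow> \<not> T n \<omega>)"
      by (intro pred_intros_countable pred_intros_logic(4) pred_intros_logic(2) pred_K pred_Tx)
    then show ?thesis unfolding E0_def pred_def by simp
  qed
  have TKs: "TK K \<in> sets M" for K
  proof -
    have "Measurable.pred M (\<lambda>\<omega>. \<forall>m. - int K \<le> m \<and> m < 0 \<longrightarrow> m + int (a m \<omega>) \<le> 0)"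
      by (intro pred_intros_countable pred_intros_logic(4) pred_K pred_a_int_le)
    then show ?thesis unfolding TK_def pred_def by simp
  qed
  have T0s: "{\<omega>\<in>space M. T 0 \<omega>} \<in> sets M" by (rule sets_T)
  have factor: "prob (E0 \<inter> TK K) = prob E0 * prob (TK K)" for K
  proof -
    define Kb where "Kb j = (if j = (0::int) then {..< - int K} else {- int K..<0})" for j
    define P where "P j x = (if j = (0::int) then (\<exists>N::nat. \<forall>n. n \<le> - int K - 1 - int N \<longrightarrow> \<not> Tx x n)
        else (\<forall>m. - int K \<le> m \<and> m < 0 \<longrightarrow> m + int (x m) \<le> 0))" for j x
    have disj: "disjoint_family_on Kb {0, 1}" unfolding disjoint_family_on_def Kb_def by auto
    have Pm: "Measurable.pred PU (P j)" if "j \<in> {0, 1}" for j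
    proof (cases "j = 0")
      case True
      have "Measurable.pred PU (\<lambda>x. \<exists>N::nat. \<forall>n. n \<le> - int K - 1 - int N \<longrightarrow> \<not> Tx (\<lambda>m. x m) n)"
        by (intro pred_intros_countable pred_intros_logic(4) pred_intros_logic(2) pred_K_gen pred_Tx_gen comp_PU)
      then show ?thesis unfolding P_def using True by simp
    next
      case False
      have "Measurable.pred PU (\<lambda>x. \<forall>m. - int K \<le> m \<and> m < 0 \<longrightarrow> m + int (x m) \<le> 0)"
        by (intro pred_intros_countable pred_intros_logic(4) pred_K_gen pred_gen_int_le comp_PU)
      then show ?thesis unfolding P_def using False by simp
    qed
    have P0: "P 0 (\<lambda>m. if m \<in> Kb 0 then a m \<omega> else 1) = (\<omega> \<in> E0)" if w: "\<omega> \<in> space M" for \<omega>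
    proof -
      have loc: "Tx (\<lambda>m. if m \<in> Kb 0 then a m \<omega> else 1) n = T n \<omega>" if "n \<le> - int K - 1 - int N" for n N
        by (rule Tx_local) (use that in \<open>auto simp: Kb_def\<close>)
      have "P 0 (\<lambda>m. if m \<in> Kb 0 then a m \<omega> else 1) = (\<exists>N::nat. \<forall>n. n \<le> - int K - 1 - int N \<longrightarrow> \<not> T n \<omega>)"
        unfolding P_def using loc by auto
      also have "\<dots> = (\<exists>N::int. \<forall>n\<le>N. \<not> T n \<omega>)"
      proof
        assume "\<exists>N::nat. \<forall>n. n \<le> - int K - 1 - int N \<longrightarrow> \<not> T n \<omega>"
        then show "\<exists>N::int. \<forall>n\<le>N. \<not> T n \<omega>" by blast
      next
        assume "\<exists>N::int. \<forall>n\<le>N. \<not> T n \<omega>"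
        then obtain N :: int where N: "\<forall>n\<le>N. \<not> T n \<omega>" by blast
        show "\<exists>N::nat. \<forall>n. n \<le> - int K - 1 - int N \<longrightarrow> \<not> T n \<omega>"
          by (rule exI[of _ "nat (- N)"]) (use N in auto)
      qed
      finally show ?thesis unfolding E0_def using w by simp
    qed
    have P1: "P 1 (\<lambda>m. if m \<in> Kb 1 then a m \<omega> else 1) = (\<omega> \<in> TK K)" if w: "\<omega> \<in> space M" for \<omega>
      unfolding P_def TK_def Kb_def using w by auto
    have "prob {\<omega>\<in>space M. \<forall>j\<in>{0,1}. P j (\<lambda>m. if m \<in> Kb j then a m \<omega> else 1)} =
         (\<Prod>j\<in>{0,1}. prob {\<omega>\<in>space M. P j (\<lambda>m. if m \<in> Kb j then a m \<omega> else 1)})"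
      by (rule indep_blocks[OF _ _ disj Pm]) auto
    moreover have "{\<omega>\<in>space M. \<forall>j\<in>{0,1}. P j (\<lambda>m. if m \<in> Kb j then a m \<omega> else 1)} = E0 \<inter> TK K"
      using P0 P1 E0_def by auto
    moreover have "{\<omega>\<in>space M. P 0 (\<lambda>m. if m \<in> Kb 0 then a m \<omega> else 1)} = E0"
      using P0 E0_def by auto
    moreover have "{\<omega>\<in>space M. P 1 (\<lambda>m. if m \<in> Kb 1 then a m \<omega> else 1)} = TK K"
      using P1 TK_def by auto
    ultimately show ?thesis by simp
  qed
  have E0T0: "prob (E0 \<inter> {\<omega>\<in>space M. T 0 \<omega>}) = 0"
  proof -
    have "AE \<omega> in M. \<omega> \<notin> E0 \<inter> {\<omega>\<in>space M. T 0 \<omega>}"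
      using AE_unbounded_below by eventually_elim (auto simp: E0_def)
    then have "E0 \<inter> {\<omega>\<in>space M. T 0 \<omega>} \<in> null_sets M"
      using AE_iff_null_sets[of "E0 \<inter> {\<omega>\<in>space M. T 0 \<omega>}"] E0s T0s by blast
    then show ?thesis by (simp add: measure_eq_0_null_sets)
  qed
  have lim: "(\<lambda>K. prob (E0 \<inter> TK K)) \<longlonglongrightarrow> prob (\<Inter>K. E0 \<inter> TK K)"
    by (rule finite_Lim_measure_decseq) (use E0s TKs in \<open>auto simp: decseq_def TK_def\<close>)
  have "(\<Inter>K. E0 \<inter> TK K) = E0 \<inter> {\<omega>\<in>space M. T 0 \<omega>}"
  proof (rule set_eqI, rule iffI)
    fix \<omega> assume h: "\<omega> \<in> (\<Inter>K. E0 \<inter> TK K)"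
    have "T 0 \<omega>" unfolding Tx_def
    proof (intro allI impI)
      fix m :: int assume "m < 0"
      then show "m + int (a m \<omega>) \<le> 0" using h unfolding TK_def
        by (auto dest!: spec[of _ "nat (- m)"])
    qed
    then show "\<omega> \<in> E0 \<inter> {\<omega>\<in>space M. T 0 \<omega>}" using h by (auto simp: E0_def)
  next
    fix \<omega> assume "\<omega> \<in> E0 \<inter> {\<omega>\<in>space M. T 0 \<omega>}"
    then show "\<omega> \<in> (\<Inter>K. E0 \<inter> TK K)" unfolding TK_def Tx_def by auto
  qed
  then have lim0: "(\<lambda>K. prob E0 * prob (TK K)) \<longlonglongrightarrow> 0" using lim E0T0 factor by simp
  have ge: "prob E0 * lam \<le> prob E0 * prob (TK K)" for K
  proof (rule mult_left_mono)
    show "lam \<le> prob (TK K)" unfolding lam_def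
      by (rule finite_measure_mono) (auto simp: TK_def Tx_def intro: TKs)
  qed simp
  have "prob E0 * lam \<le> 0"
    by (rule LIMSEQ_le_const[OF lim0]) (use ge in blast)
  then have "prob E0 = 0" using lam_pos measure_nonneg[of M E0]
    by (simp add: mult_le_0_iff)
  then show ?thesis
    by (rule null_AE[OF E0s]) (auto simp: E0_def)
qed

end



definition Qp :: "int set \<Rightarrow> bool" where
  "Qp S \<longleftrightarrow> (\<exists>k::int \<Rightarrow> int. strict_mono k \<and> range k = S \<and> k 0 \<le> 0 \<and> 0 < k 1)"

definition unb :: "int set \<Rightarrow> bool" where
  "unb S \<longleftrightarrow> (\<forall>N. \<exists>s\<in>S. N \<le> s) \<and> (\<forall>N. \<exists>s\<in>S. s \<le> N)"

lemma enum_succ: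
  assumes "strict_mono (k::int\<Rightarrow>int)" "range k = S" "s \<in> S" "k j < s"
  shows "k (j + 1) \<le> s"
proof -
  obtain i where i: "s = k i" using assms(2,3) by blast
  then have "j < i" using assms(1,4) strict_mono_less by blast
  then have "j + 1 \<le> i" by simp
  then show ?thesis using i assms(1) strict_mono_less_eq by blast
qed

lemma enum_pred:
  assumes "strict_mono (k::int\<Rightarrow>int)" "range k = S" "s \<in> S" "s < k j"
  shows "s \<le> k (j - 1)"
proof -
  obtain i where i: "s = k i" using assms(2,3) by blast
  then have "i < j" using assms(1,4) strict_mono_less by blast
  then have "i \<le> j - 1" by simp
  then show ?thesis using i assms(1) strict_mono_less_eq by blast
qed

lemma enum_gap:
  assumes "strict_mono (k::int\<Rightarrow>int)" "range k = S" "k j < w" "w < k (j + 1)"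
  shows "w \<notin> S"
  using enum_succ[OF assms(1,2) _ assms(3)] assms(4) by force

lemma enum_zero:
  assumes "strict_mono (k::int\<Rightarrow>int)" "range k = S" "0 < k 1" "s \<in> S" "s \<le> 0"
  shows "s \<le> k 0"
proof -
  obtain i where i: "s = k i" using assms(2,4) by blast
  show ?thesis
  proof (cases "1 \<le> i")
    case True
    then have "k 1 \<le> k i" using assms(1) strict_mono_less_eq by blast
    then show ?thesis using assms(3,5) i by simp
  next
    case False
    then have "i \<le> 0" by simp
    then show ?thesis using i assms(1) strict_mono_less_eq by blast
  qed
qed

lemma enum_unique_fun:
  assumes k: "strict_mono (k::int\<Rightarrow>int)" "range k = S" "k 0 \<le> 0" "0 < k 1"
    and k': "strict_mono (k'::int\<Rightarrow>int)" "range k' = S" "k' 0 \<le> 0" "0 < k' 1"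
  shows "k = k'"
proof
  fix j
  have kS: "k i \<in> S" for i using k(2) by blast
  have k'S: "k' i \<in> S" for i using k'(2) by blast
  have b1: "k' 0 \<le> k 0" by (rule enum_zero[OF k(1,2,4) k'S[of 0] k'(3)])
  have b2: "k 0 \<le> k' 0" by (rule enum_zero[OF k'(1,2,4) kS[of 0] k(3)])
  have k00: "k 0 = k' 0" using b1 b2 by linarith
  show "k j = k' j"
  proof (induction j rule: int_induct[where k=0])
    case base then show ?case by (rule k00)
  next
    case (step1 i)
    have "k i < k (i + 1)" using k(1) by (simp add: strict_mono_less)
    moreover have "k' i < k' (i + 1)" using k'(1) by (simp add: strict_mono_less)
    ultimately show ?case
      using enum_succ[OF k(1,2) k'S, of i "i + 1"] enum_succ[OF k'(1,2) kS, of i "i + 1"] step1.IH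
      by simp
  next
    case (step2 i)
    have "k (i - 1) < k i" using k(1) by (simp add: strict_mono_less)
    moreover have "k' (i - 1) < k' i" using k'(1) by (simp add: strict_mono_less)
    ultimately show ?case
      using enum_pred[OF k(1,2) k'S, of "i - 1" i] enum_pred[OF k'(1,2) kS, of "i - 1" i] step2.IH
      by simp
  qed
qed

lemma enum_points_eq:
  assumes "strict_mono (k::int\<Rightarrow>int)" "range k = S" "k 0 \<le> 0" "0 < k 1"
  shows "enum_points S = k"
proof -
  have ex: "\<exists>k::int \<Rightarrow> int. strict_mono k \<and> range k = S \<and> k 0 \<le> 0 \<and> 0 < k 1" using assms by blast
  have "(THE k::int \<Rightarrow> int. strict_mono k \<and> range k = S \<and> k 0 \<le> 0 \<and> 0 < k 1) = k"
    by (rule the_equality) (use assms enum_unique_fun in blast)+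
  then show ?thesis unfolding enum_points_def using ex by simp
qed

lemma enum_points_not: assumes "\<not> Qp S" shows "enum_points S = (\<lambda>_. 0)"
proof -
  have "\<not> (\<exists>k::int\<Rightarrow>int. strict_mono k \<and> range k = S \<and> k 0 \<le> 0 \<and> 0 < k 1)"
    using assms unfolding Qp_def .
  then show ?thesis unfolding enum_points_def by (rule if_not_P)
qed

lemma enum_nz_Qp: "enum_points S j \<noteq> 0 \<Longrightarrow> Qp S"
  using enum_points_not by force

lemma Qp_obtain:
  assumes "Qp S"
  obtains k where "strict_mono (k::int\<Rightarrow>int)" "range k = S" "k 0 \<le> 0" "0 < k 1" "enum_points S = k"
  using assms enum_points_eq unfolding Qp_def by blast

lemma sm_ge: "strict_mono (k::int\<Rightarrow>int) \<Longrightarrow> k 0 + int n \<le> k (int n)"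
proof (induction n)
  case (Suc n)
  have "k (int n) < k (int (Suc n))" using Suc.prems by (simp add: strict_mono_less)
  then show ?case using Suc by simp
qed simp

lemma sm_le: "strict_mono (k::int\<Rightarrow>int) \<Longrightarrow> k (- int n) \<le> k 0 - int n"
proof (induction n)
  case (Suc n)
  have "k (- int (Suc n)) < k (- int n)" using Suc.prems by (simp add: strict_mono_less)
  then show ?case using Suc by simp
qed simp

lemma Qp_unb: "Qp S \<Longrightarrow> unb S"
proof -
  assume "Qp S"
  then obtain k where k: "strict_mono (k::int\<Rightarrow>int)" "range k = S" unfolding Qp_def by blast
  have up: "\<exists>s\<in>S. N \<le> s" for N
  proof -
    have "k 0 + int (nat (N - k 0)) \<le> k (int (nat (N - k 0)))" by (rule sm_ge[OF k(1)])
    then have "N \<le> k (int (nat (N - k 0)))" by linarith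
    then show ?thesis using k(2) by blast
  qed
  have down: "\<exists>s\<in>S. s \<le> N" for N
  proof -
    have "k (- int (nat (k 0 - N))) \<le> k 0 - int (nat (k 0 - N))" by (rule sm_le[OF k(1)])
    then have "k (- int (nat (k 0 - N))) \<le> N" by linarith
    then show ?thesis using k(2) by blast
  qed
  show "unb S" unfolding unb_def using up down by blast
qed

lemma unb_Qp: "unb S \<Longrightarrow> Qp S"
proof -
  assume u: "unb S"
  define P where "P = nat ` {s\<in>S. 0 < s}"
  define Nn where "Nn = (\<lambda>s. nat (- s)) ` {s\<in>S. s \<le> 0}"
  have infP: "infinite P" unfolding infinite_nat_iff_unbounded_le
  proof
    fix m :: nat
    obtain s where s: "s \<in> S" "int m + 1 \<le> s" using u unfolding unb_def by blast
    then show "\<exists>n\<ge>m. n \<in> P" unfolding P_def by (intro exI[of _ "nat s"]) auto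
  qed
  have infN: "infinite Nn" unfolding infinite_nat_iff_unbounded_le
  proof
    fix m :: nat
    obtain s where s: "s \<in> S" "s \<le> - int m" using u unfolding unb_def by blast
    then show "\<exists>n\<ge>m. n \<in> Nn" unfolding Nn_def by (intro exI[of _ "nat (- s)"]) auto
  qed
  have eP: "int (enumerate P i) \<in> S \<and> 0 < int (enumerate P i)" for i
  proof -
    have "enumerate P i \<in> P" by (rule enumerate_in_set[OF infP])
    then show ?thesis unfolding P_def by auto
  qed
  have eN: "- int (enumerate Nn i) \<in> S" for i
  proof -
    have "enumerate Nn i \<in> Nn" by (rule enumerate_in_set[OF infN])
    then show ?thesis unfolding Nn_def by auto
  qed
  define k where "k j = (if 1 \<le> j then int (enumerate P (nat (j - 1))) else - int (enumerate Nn (nat (- j))))" for j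
  have sm: "strict_mono k"
  proof (rule strict_monoI)
    fix i j :: int assume ij: "i < j"
    show "k i < k j"
    proof (cases "1 \<le> i")
      case True
      then have "nat (i - 1) < nat (j - 1)" using ij by simp
      then show ?thesis using True ij unfolding k_def by (simp add: enumerate_mono[OF _ infP])
    next
      case False
      show ?thesis
      proof (cases "1 \<le> j")
        case True
        then show ?thesis using False eP[of "nat (j - 1)"] unfolding k_def by simp
      next
        case False2: False
        then have "nat (- j) < nat (- i)" using ij False by simp
        then have "enumerate Nn (nat (- j)) < enumerate Nn (nat (- i))" by (simp add: enumerate_mono[OF _ infN])
        then show ?thesis using False False2 unfolding k_def by simp
      qed
    qed
  qed
  have rng: "range k = S"
  proof
    show "range k \<subseteq> S" unfolding k_def using eP eN by auto
    show "S \<subseteq> range k"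
    proof
      fix s assume s: "s \<in> S"
      show "s \<in> range k"
      proof (cases "0 < s")
        case True
        then have "nat s \<in> P" unfolding P_def using s by auto
        then obtain n where n: "enumerate P n = nat s" using enumerate_Ex[OF infP] by blast
        have "k (int n + 1) = s" unfolding k_def using n True by simp
        then show ?thesis by (metis rangeI)
      next
        case False
        then have "nat (- s) \<in> Nn" unfolding Nn_def using s by auto
        then obtain n where n: "enumerate Nn n = nat (- s)" using enumerate_Ex[OF infN] by blast
        have "k (- int n) = s" unfolding k_def using n False by simp
        then show ?thesis by (metis rangeI)
      qed
    qed
  qed
  have "k 0 \<le> 0" unfolding k_def by simp
  moreover have "0 < k 1" unfolding k_def using eP[of 0] by simp
  ultimately show "Qp S" unfolding Qp_def using sm rng by blast
qed

lemma Qp_iff_unb: "Qp S = unb S" using Qp_unb unb_Qp by blast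

lemma enum_char0:
  assumes "Qp S"
  shows "(enum_points S 0 = v) \<longleftrightarrow> (v \<in> S \<and> v \<le> 0 \<and> (\<forall>w. v < w \<and> w \<le> 0 \<longrightarrow> w \<notin> S))"
proof -
  obtain k where k: "strict_mono (k::int\<Rightarrow>int)" "range k = S" "k 0 \<le> 0" "0 < k 1" "enum_points S = k"
    using Qp_obtain[OF assms] by blast
  have k0S: "k 0 \<in> S" using k(2) by blast
  show ?thesis
  proof
    assume "enum_points S 0 = v"
    then have v: "v = k 0" using k(5) by simp
    show "v \<in> S \<and> v \<le> 0 \<and> (\<forall>w. v < w \<and> w \<le> 0 \<longrightarrow> w \<notin> S)"
      using v k0S k(3) enum_zero[OF k(1,2,4)] by force
  next
    assume h: "v \<in> S \<and> v \<le> 0 \<and> (\<forall>w. v < w \<and> w \<le> 0 \<longrightarrow> w \<notin> S)"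
    then have "v \<le> k 0" using enum_zero[OF k(1,2,4)] by blast
    moreover have "\<not> v < k 0" using h k0S k(3) by blast
    ultimately show "enum_points S 0 = v" using k(5) by simp
  qed
qed

lemma enum_char_succ:
  assumes "Qp S"
  shows "(enum_points S (j + 1) = v) \<longleftrightarrow>
     (v \<in> S \<and> enum_points S j < v \<and> (\<forall>w. enum_points S j < w \<and> w < v \<longrightarrow> w \<notin> S))"
proof -
  obtain k where k: "strict_mono (k::int\<Rightarrow>int)" "range k = S" "k 0 \<le> 0" "0 < k 1" "enum_points S = k"
    using Qp_obtain[OF assms] by blast
  have kS: "k i \<in> S" for i using k(2) by blast
  have lt: "k j < k (j + 1)" using k(1) by (simp add: strict_mono_less)
  show ?thesis unfolding k(5)
  proof
    assume "k (j + 1) = v"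
    then show "v \<in> S \<and> k j < v \<and> (\<forall>w. k j < w \<and> w < v \<longrightarrow> w \<notin> S)"
      using kS lt enum_gap[OF k(1,2)] by blast
  next
    assume h: "v \<in> S \<and> k j < v \<and> (\<forall>w. k j < w \<and> w < v \<longrightarrow> w \<notin> S)"
    then have "k (j + 1) \<le> v" using enum_succ[OF k(1,2)] by blast
    moreover have "\<not> k (j + 1) < v" using h kS lt by blast
    ultimately show "k (j + 1) = v" by simp
  qed
qed

lemma enum_char_pred:
  assumes "Qp S"
  shows "(enum_points S (j - 1) = v) \<longleftrightarrow>
     (v \<in> S \<and> v < enum_points S j \<and> (\<forall>w. v < w \<and> w < enum_points S j \<longrightarrow> w \<notin> S))"
proof -
  obtain k where k: "strict_mono (k::int\<Rightarrow>int)" "range k = S" "k 0 \<le> 0" "0 < k 1" "enum_points S = k"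
    using Qp_obtain[OF assms] by blast
  have kS: "k i \<in> S" for i using k(2) by blast
  have lt: "k (j - 1) < k j" using k(1) by (simp add: strict_mono_less)
  have gap: "w \<notin> S" if "k (j - 1) < w" "w < k j" for w
    using enum_gap[OF k(1,2), of "j - 1" w] that by simp
  show ?thesis unfolding k(5)
  proof
    assume "k (j - 1) = v"
    then show "v \<in> S \<and> v < k j \<and> (\<forall>w. v < w \<and> w < k j \<longrightarrow> w \<notin> S)"
      using kS lt gap by blast
  next
    assume h: "v \<in> S \<and> v < k j \<and> (\<forall>w. v < w \<and> w < k j \<longrightarrow> w \<notin> S)"
    then have "v \<le> k (j - 1)" using enum_pred[OF k(1,2)] by blast
    moreover have "\<not> v < k (j - 1)" using h kS lt by blast
    ultimately show "k (j - 1) = v" by simp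
  qed
qed

lemma enum_meas:
  fixes \<Phi> :: "'a \<Rightarrow> int set"
  assumes \<Phi>: "\<And>n. Measurable.pred M (\<lambda>\<omega>. n \<in> \<Phi> \<omega>)"
  shows "(\<lambda>\<omega>. enum_points (\<Phi> \<omega>) j) \<in> M \<rightarrow>\<^sub>M count_space UNIV"
proof -
  have Qs: "{\<omega>\<in>space M. Qp (\<Phi> \<omega>)} \<in> sets M"
  proof -
    have "Measurable.pred M (\<lambda>\<omega>. (\<forall>N. \<exists>s. s \<in> \<Phi> \<omega> \<and> N \<le> s) \<and> (\<forall>N. \<exists>s. s \<in> \<Phi> \<omega> \<and> s \<le> N))"
      by (intro pred_intros_countable pred_intros_logic(3) pred_K_gen \<Phi>)
    then show ?thesis unfolding pred_def Qp_iff_unb unb_def by (simp add: Bex_def)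
  qed
  define X where "X j v = {\<omega>\<in>space M. Qp (\<Phi> \<omega>) \<and> enum_points (\<Phi> \<omega>) j = v}" for j v
  have Xs: "\<forall>v. X j v \<in> sets M"
  proof (induction j rule: int_induct[where k=0])
    case base
    show ?case
    proof
      fix v
      have "Measurable.pred M (\<lambda>\<omega>. v \<in> \<Phi> \<omega> \<and> v \<le> 0 \<and> (\<forall>w. v < w \<and> w \<le> 0 \<longrightarrow> \<not> w \<in> \<Phi> \<omega>))"
        by (intro pred_intros_countable pred_intros_logic(2,3,4) pred_K_gen \<Phi>)
      then have "{\<omega>\<in>space M. Qp (\<Phi> \<omega>)} \<inter> {\<omega>\<in>space M. v \<in> \<Phi> \<omega> \<and> v \<le> 0 \<and> (\<forall>w. v < w \<and> w \<le> 0 \<longrightarrow> \<not> w \<in> \<Phi> \<omega>)} \<in> sets M"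
        using Qs unfolding pred_def by blast
      moreover have "X 0 v = {\<omega>\<in>space M. Qp (\<Phi> \<omega>)} \<inter> {\<omega>\<in>space M. v \<in> \<Phi> \<omega> \<and> v \<le> 0 \<and> (\<forall>w. v < w \<and> w \<le> 0 \<longrightarrow> \<not> w \<in> \<Phi> \<omega>)}"
        unfolding X_def using enum_char0 by blast
      ultimately show "X 0 v \<in> sets M" by simp
    qed
  next
    case (step1 i)
    show ?case
    proof
      fix v
      have G: "{\<omega>\<in>space M. v \<in> \<Phi> \<omega> \<and> u < v \<and> (\<forall>w. u < w \<and> w < v \<longrightarrow> \<not> w \<in> \<Phi> \<omega>)} \<in> sets M" for u
      proof -
        have "Measurable.pred M (\<lambda>\<omega>. v \<in> \<Phi> \<omega> \<and> u < v \<and> (\<forall>w. u < w \<and> w < v \<longrightarrow> \<not> w \<in> \<Phi> \<omega>))"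
          by (intro pred_intros_countable pred_intros_logic(2,3,4) pred_K_gen \<Phi>)
        then show ?thesis unfolding pred_def .
      qed
      have "X (i + 1) v = (\<Union>u. X i u \<inter> {\<omega>\<in>space M. v \<in> \<Phi> \<omega> \<and> u < v \<and> (\<forall>w. u < w \<and> w < v \<longrightarrow> \<not> w \<in> \<Phi> \<omega>)})"
        unfolding X_def using enum_char_succ by blast
      moreover have "(\<Union>u. X i u \<inter> {\<omega>\<in>space M. v \<in> \<Phi> \<omega> \<and> u < v \<and> (\<forall>w. u < w \<and> w < v \<longrightarrow> \<not> w \<in> \<Phi> \<omega>)}) \<in> sets M"
        using step1.IH G by (intro sets.countable_UN) blast
      ultimately show "X (i + 1) v \<in> sets M" by simp
    qed
  next
    case (step2 i)
    show ?case
    proof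
      fix v
      have G: "{\<omega>\<in>space M. v \<in> \<Phi> \<omega> \<and> v < u \<and> (\<forall>w. v < w \<and> w < u \<longrightarrow> \<not> w \<in> \<Phi> \<omega>)} \<in> sets M" for u
      proof -
        have "Measurable.pred M (\<lambda>\<omega>. v \<in> \<Phi> \<omega> \<and> v < u \<and> (\<forall>w. v < w \<and> w < u \<longrightarrow> \<not> w \<in> \<Phi> \<omega>))"
          by (intro pred_intros_countable pred_intros_logic(2,3,4) pred_K_gen \<Phi>)
        then show ?thesis unfolding pred_def .
      qed
      have "X (i - 1) v = (\<Union>u. X i u \<inter> {\<omega>\<in>space M. v \<in> \<Phi> \<omega> \<and> v < u \<and> (\<forall>w. v < w \<and> w < u \<longrightarrow> \<not> w \<in> \<Phi> \<omega>)})"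
        unfolding X_def using enum_char_pred by blast
      moreover have "(\<Union>u. X i u \<inter> {\<omega>\<in>space M. v \<in> \<Phi> \<omega> \<and> v < u \<and> (\<forall>w. v < w \<and> w < u \<longrightarrow> \<not> w \<in> \<Phi> \<omega>)}) \<in> sets M"
        using step2.IH G by (intro sets.countable_UN) blast
      ultimately show "X (i - 1) v \<in> sets M" by simp
    qed
  qed
  have "(\<lambda>\<omega>. enum_points (\<Phi> \<omega>) j) -` {v} \<inter> space M \<in> sets M" for v
  proof -
    have "(\<lambda>\<omega>. enum_points (\<Phi> \<omega>) j) -` {v} \<inter> space M =
          X j v \<union> (if v = 0 then space M - {\<omega>\<in>space M. Qp (\<Phi> \<omega>)} else {})"
      unfolding X_def using enum_points_not enum_nz_Qp by auto
    moreover have "X j v \<union> (if v = 0 then space M - {\<omega>\<in>space M. Qp (\<Phi> \<omega>)} else {}) \<in> sets M"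
      using Xs Qs by auto
    ultimately show ?thesis by simp
  qed
  then show ?thesis by (subst measurable_count_space_eq2_countable) auto
qed

lemma diff_meas:
  fixes f g :: "'a \<Rightarrow> int"
  assumes "f \<in> M \<rightarrow>\<^sub>M count_space UNIV" "g \<in> M \<rightarrow>\<^sub>M count_space UNIV"
  shows "(\<lambda>\<omega>. f \<omega> - g \<omega>) \<in> M \<rightarrow>\<^sub>M count_space UNIV"
proof -
  have "(\<lambda>\<omega>. f \<omega> - g \<omega>) -` {d} \<inter> space M \<in> sets M" for d
  proof -
    have "(\<lambda>\<omega>. f \<omega> - g \<omega>) -` {d} \<inter> space M = (\<Union>u. (f -` {u + d} \<inter> space M) \<inter> (g -` {u} \<inter> space M))"
      by auto
    moreover have "(\<Union>u. (f -` {u + d} \<inter> space M) \<inter> (g -` {u} \<inter> space M)) \<in> sets M"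
      using measurable_sets[OF assms(1)] measurable_sets[OF assms(2)] by (intro sets.countable_UN) auto
    ultimately show ?thesis by simp
  qed
  then show ?thesis by (subst measurable_count_space_eq2_countable) auto
qed




lemma L1:
  assumes "Tx x u" "Bx x u v"
  shows "Tx x v \<and> u < v \<and> (\<forall>w. u < w \<and> w < v \<longrightarrow> \<not> Tx x w)"
proof -
  have uv: "u < v" using assms(2) unfolding Bx_def by blast
  have "Tx x v" unfolding Tx_def
  proof (intro allI impI)
    fix m assume m: "m < v"
    show "m + int (x m) \<le> v"
    proof (cases "m < u")
      case True
      then have "m + int (x m) \<le> u" using assms(1) unfolding Tx_def by blast
      then show ?thesis using uv by simp
    next
      case False
      then show ?thesis using assms(2) m unfolding Bx_def by simp
    qed
  qed
  moreover have "\<forall>w. u < w \<and> w < v \<longrightarrow> \<not> Tx x w"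
  proof (intro allI impI)
    fix w assume w: "u < w \<and> w < v"
    then obtain m where "u \<le> m" "m < w" "w < m + int (x m)" using assms(2) unfolding Bx_def by blast
    then show "\<not> Tx x w" unfolding Tx_def by force
  qed
  ultimately show ?thesis using uv by blast
qed

lemma L2:
  assumes "Tx x u" "u < v" "Tx x v" "\<forall>w. u < w \<and> w < v \<longrightarrow> \<not> Tx x w"
  shows "Bx x u v"
  unfolding Bx_def
proof (intro conjI allI impI)
  show "u < v" by fact
  fix m assume "u \<le> m \<and> m < v"
  then show "m + int (x m) \<le> v" using assms(3) unfolding Tx_def by blast
next
  fix w assume w: "u < w \<and> w < v"
  then have "\<not> Tx x w" using assms(4) by blast
  then obtain m where m: "m < w" "w < m + int (x m)" unfolding Tx_def by (auto simp: not_le)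
  have "u \<le> m"
  proof (rule ccontr)
    assume "\<not> u \<le> m"
    then have "m + int (x m) \<le> u" using assms(1) unfolding Tx_def by simp
    then show False using m w by simp
  qed
  then show "\<exists>m. u \<le> m \<and> m < w \<and> w < m + int (x m)" using m by blast
qed

lemma int_interval_induct0:
  fixes b lo hi :: int
  assumes "lo \<le> b" "b \<le> hi" "P b"
    and up: "\<And>j. b \<le> j \<Longrightarrow> j < hi \<Longrightarrow> P j \<Longrightarrow> P (j + 1)"
    and down: "\<And>j. lo < j \<Longrightarrow> j \<le> b \<Longrightarrow> P j \<Longrightarrow> P (j - 1)"
  shows "lo \<le> j \<Longrightarrow> j \<le> hi \<Longrightarrow> P j"
proof (induction j rule: int_induct[where k=b])
  case base then show ?case using assms(3) by simp
next
  case (step1 i)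
  have "lo \<le> i" "i \<le> hi" using assms(1) step1 by linarith+
  then have "P i" using step1(2) by blast
  moreover have "i < hi" using step1 by linarith
  ultimately show ?case using up[of i] step1(1) by blast
next
  case (step2 i)
  have "lo \<le> i" "i \<le> hi" using assms(2) step2 by linarith+
  then have "P i" using step2(2) by blast
  moreover have "lo < i" using step2 by linarith
  ultimately show ?case using down[of i] step2(1) by blast
qed

lemma int_interval_induct:
  fixes b lo hi :: int
  assumes "lo \<le> b" "b \<le> hi" "P b"
    and "\<And>j. b \<le> j \<Longrightarrow> j < hi \<Longrightarrow> P j \<Longrightarrow> P (j + 1)"
    and "\<And>j. lo < j \<Longrightarrow> j \<le> b \<Longrightarrow> P j \<Longrightarrow> P (j - 1)"
  shows "\<forall>j. lo \<le> j \<and> j \<le> hi \<longrightarrow> P j"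
  using int_interval_induct0[of lo b hi P, OF assms] by blast

lemma t_exists: "\<exists>t::int\<Rightarrow>int. t 0 = 0 \<and> (\<forall>j. t j - t (j - 1) = d j)"
proof -
  define t where "t j = (if 0 \<le> j then (\<Sum>i<nat j. d (int i + 1)) else - (\<Sum>i<nat (- j). d (- int i)))" for j
  have "t j - t (j - 1) = d j" for j
  proof (cases "1 \<le> j")
    case True
    then have "nat j = Suc (nat (j - 1))" by simp
    then show ?thesis unfolding t_def using True by simp
  next
    case False
    then have "nat (- (j - 1)) = Suc (nat (- j))" by simp
    then show ?thesis unfolding t_def using False by simp
  qed
  moreover have "t 0 = 0" unfolding t_def by simp
  ultimately show ?thesis by blast
qed

lemma agree_from_diffs:
  fixes f g :: "int \<Rightarrow> int"
  assumes "lo \<le> 0" "0 \<le> hi" "f 0 = g 0" "\<forall>j\<in>{lo..hi}. f j - f (j - 1) = g j - g (j - 1)"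
  shows "\<forall>j\<in>{lo - 1..hi}. f j = g j"
proof
  fix j assume j: "j \<in> {lo - 1..hi}"
  have "\<forall>j. lo - 1 \<le> j \<and> j \<le> hi \<longrightarrow> f j = g j"
  proof (rule int_interval_induct[where b=0])
    fix i assume "0 \<le> i" "i < hi" "f i = g i"
    then show "f (i + 1) = g (i + 1)" using assms(4)[rule_format, of "i + 1"] assms(1) by simp
  next
    fix i assume "lo - 1 < i" "i \<le> 0" "f i = g i"
    then show "f (i - 1) = g (i - 1)" using assms(2) assms(4)[rule_format, of i] by simp
  qed (use assms in auto)
  then show "f j = g j" using j by auto
qed

lemma Bx_pos: "Bx x u v \<Longrightarrow> u < v" unfolding Bx_def by blast

lemma path_equiv:
  fixes x :: "int \<Rightarrow> nat" and t d :: "int \<Rightarrow> int"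
  defines "S \<equiv> {n. Tx x n}"
  assumes unbS: "Tx x 0 \<Longrightarrow> unb S" and lohi: "lo \<le> 0" "1 \<le> hi"
    and t0: "t 0 = 0" and td: "\<forall>j. t j - t (j - 1) = d j"
  shows "(0 \<in> S \<and> (\<forall>j\<in>{lo..hi}. enum_points S j - enum_points S (j - 1) = d j)) \<longleftrightarrow>
         (Tx x (t (lo - 1)) \<and> (\<forall>j\<in>{lo..hi}. Bx x (t (j - 1)) (t j)))"
proof
  assume h: "0 \<in> S \<and> (\<forall>j\<in>{lo..hi}. enum_points S j - enum_points S (j - 1) = d j)"
  then have Q: "Qp S" using unbS unb_Qp unfolding S_def by blast
  then obtain k where k: "strict_mono (k::int\<Rightarrow>int)" "range k = S" "k 0 \<le> 0" "0 < k 1" "enum_points S = k"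
    using Qp_obtain by blast
  have "0 \<le> k 0" using enum_zero[OF k(1,2,4)] h by blast
  then have k0: "k 0 = t 0" using k(3) t0 by simp
  have "\<forall>j\<in>{lo - 1..hi}. k j = t j"
    by (rule agree_from_diffs) (use lohi k0 h k(5) td in auto)
  then have kt: "k j = t j" if "lo - 1 \<le> j" "j \<le> hi" for j using that by auto
  have kS: "Tx x (k j)" for j using k(2) unfolding S_def by blast
  have "Tx x (t (lo - 1))" using kS[of "lo - 1"] kt[of "lo - 1"] lohi by simp
  moreover have "Bx x (t (j - 1)) (t j)" if j: "j \<in> {lo..hi}" for j
  proof -
    have "Bx x (k (j - 1)) (k j)"
    proof (rule L2)
      show "Tx x (k (j - 1))" "Tx x (k j)" by (rule kS)+
      show "k (j - 1) < k j" using k(1) by (simp add: strict_mono_less)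
      show "\<forall>w. k (j - 1) < w \<and> w < k j \<longrightarrow> \<not> Tx x w"
        using enum_gap[OF k(1,2), of "j - 1"] unfolding S_def by simp
    qed
    then show ?thesis using kt[of j] kt[of "j - 1"] j by simp
  qed
  ultimately show "Tx x (t (lo - 1)) \<and> (\<forall>j\<in>{lo..hi}. Bx x (t (j - 1)) (t j))" by blast
next
  assume h: "Tx x (t (lo - 1)) \<and> (\<forall>j\<in>{lo..hi}. Bx x (t (j - 1)) (t j))"
  have tT0: "\<forall>j. lo - 1 \<le> j \<and> j \<le> hi \<longrightarrow> Tx x (t j)"
  proof (rule int_interval_induct[where b="lo - 1"])
    show "Tx x (t (lo - 1))" using h by blast
  next
    fix i assume i: "lo - 1 \<le> i" "i < hi" "Tx x (t i)"
    have "i + 1 \<in> {lo..hi}" using i by simp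
    then have "Bx x (t (i + 1 - 1)) (t (i + 1))" using h by blast
    then have "Bx x (t i) (t (i + 1))" by simp
    then show "Tx x (t (i + 1))" using L1[of x "t i" "t (i + 1)"] i(3) by blast
  qed (use lohi in auto)
  have tT: "Tx x (t j)" if "lo - 1 \<le> j" "j \<le> hi" for j using tT0 that by blast
  have gap: "\<forall>w. t (j - 1) < w \<and> w < t j \<longrightarrow> w \<notin> S" if "j \<in> {lo..hi}" for j
    using L1[of x "t (j - 1)" "t j"] tT[of "j - 1"] h that unfolding S_def by auto
  have tlt: "t (j - 1) < t j" if "j \<in> {lo..hi}" for j using h that Bx_pos by blast
  have tS: "t j \<in> S" if "lo - 1 \<le> j" "j \<le> hi" for j using tT that unfolding S_def by blast
  have "0 \<in> S" using tS[of 0] t0 lohi by simp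
  then have Q: "Qp S" using unbS unb_Qp unfolding S_def by blast
  have e0: "enum_points S 0 = t 0"
  proof -
    obtain k where k: "strict_mono (k::int\<Rightarrow>int)" "range k = S" "k 0 \<le> 0" "0 < k 1" "enum_points S = k"
      using Qp_obtain[OF Q] by blast
    have "0 \<le> k 0" using enum_zero[OF k(1,2,4)] \<open>0 \<in> S\<close> by blast
    then show ?thesis using k(3,5) t0 by simp
  qed
  have et0: "\<forall>j. lo - 1 \<le> j \<and> j \<le> hi \<longrightarrow> enum_points S j = t j"
  proof (rule int_interval_induct[where b=0])
    show "enum_points S 0 = t 0" by (rule e0)
  next
    fix i assume i: "0 \<le> i" "i < hi" "enum_points S i = t i"
    have "i + 1 \<in> {lo..hi}" using i lohi by simp
    then show "enum_points S (i + 1) = t (i + 1)"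
      unfolding enum_char_succ[OF Q] i(3) using gap[of "i + 1"] tlt[of "i + 1"] tS[of "i + 1"] i by simp
  next
    fix i assume i: "lo - 1 < i" "i \<le> 0" "enum_points S i = t i"
    have "i \<in> {lo..hi}" using i lohi by simp
    then show "enum_points S (i - 1) = t (i - 1)"
      unfolding enum_char_pred[OF Q] i(3) using gap[of i] tlt[of i] tS[of "i - 1"] i by simp
  qed (use lohi in auto)
  have et: "enum_points S j = t j" if "lo - 1 \<le> j" "j \<le> hi" for j using et0 that by blast
  have "\<forall>j\<in>{lo..hi}. enum_points S j - enum_points S (j - 1) = d j"
  proof
    fix j assume "j \<in> {lo..hi}"
    then show "enum_points S j - enum_points S (j - 1) = d j"
      using et[of j] et[of "j - 1"] td by auto
  qed
  then show "0 \<in> S \<and> (\<forall>j\<in>{lo..hi}. enum_points S j - enum_points S (j - 1) = d j)"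
    using \<open>0 \<in> S\<close> by blast
qed

lemma Bx_shift: "Bx (\<lambda>m. x (m + N)) u v \<longleftrightarrow> Bx x (u + N) (v + N)"
proof
  assume h: "Bx (\<lambda>m. x (m + N)) u v"
  show "Bx x (u + N) (v + N)" unfolding Bx_def
  proof (intro conjI allI impI)
    show "u + N < v + N" using h unfolding Bx_def by simp
    fix m assume m: "u + N \<le> m \<and> m < v + N"
    have c: "\<forall>m'. u \<le> m' \<and> m' < v \<longrightarrow> m' + int (x (m' + N)) \<le> v" using h unfolding Bx_def by blast
    have "m - N + int (x (m - N + N)) \<le> v" using c[rule_format, of "m - N"] m by simp
    then show "m + int (x m) \<le> v + N" by simp
  next
    fix w assume w: "u + N < w \<and> w < v + N"
    then obtain m where "u \<le> m" "m < w - N" "w - N < m + int (x (m + N))"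
      using h unfolding Bx_def by (metis add_less_cancel_right diff_add_cancel)
    then show "\<exists>m. u + N \<le> m \<and> m < w \<and> w < m + int (x m)"
      by (intro exI[of _ "m + N"]) simp
  qed
next
  assume h: "Bx x (u + N) (v + N)"
  show "Bx (\<lambda>m. x (m + N)) u v" unfolding Bx_def
  proof (intro conjI allI impI)
    show "u < v" using h unfolding Bx_def by simp
    fix m assume m: "u \<le> m \<and> m < v"
    then have "m + N + int (x (m + N)) \<le> v + N" using h unfolding Bx_def by auto
    then show "m + int (x (m + N)) \<le> v" by simp
  next
    fix w assume w: "u < w \<and> w < v"
    then have "u + N < w + N \<and> w + N < v + N" by simp
    then obtain m where "u + N \<le> m" "m < w + N" "w + N < m + int (x m)"
      using h unfolding Bx_def by blast
    then show "\<exists>m. u \<le> m \<and> m < w \<and> w < m + int (x (m + N))"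
      by (intro exI[of _ "m - N"]) simp
  qed
qed

lemma t_mono:
  fixes t d :: "int \<Rightarrow> int"
  assumes td: "\<forall>j. t j - t (j - 1) = d j" and pos: "\<forall>j\<in>{lo..hi}. 0 < d j"
  shows "lo - 1 \<le> i \<Longrightarrow> i + int n \<le> hi \<Longrightarrow> t i + int n \<le> t (i + int n)"
proof (induction n)
  case (Suc n)
  have "t (i + int n + 1) - t (i + int n) = d (i + int n + 1)" using td[rule_format, of "i + int n + 1"] by simp
  moreover have "0 < d (i + int n + 1)" using pos Suc.prems by auto
  moreover have e: "i + int (Suc n) = i + int n + 1" by simp
  ultimately show ?case unfolding e using Suc by simp
qed simp




context setting
begin

definition Dv :: "int \<Rightarrow> 'a \<Rightarrow> int" where
  "Dv j \<omega> = enum_points (Psi \<omega>) j - enum_points (Psi \<omega>) (j - 1)"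

definition q :: "int \<Rightarrow> real" where
  "q d = prob {\<omega>\<in>space M. Bx (\<lambda>m. a m \<omega>) 0 d}"

lemma enum_Psi_meas: "(\<lambda>\<omega>. enum_points (Psi \<omega>) j) \<in> M \<rightarrow>\<^sub>M count_space UNIV"
  by (rule enum_meas) (rule pred_Psi)

lemma Dv_meas: "Dv j \<in> M \<rightarrow>\<^sub>M count_space UNIV"
proof -
  have "(\<lambda>\<omega>. enum_points (Psi \<omega>) j - enum_points (Psi \<omega>) (j - 1)) \<in> M \<rightarrow>\<^sub>M count_space UNIV"
    by (rule diff_meas) (rule enum_Psi_meas)+
  then show ?thesis unfolding Dv_def[abs_def] .
qed

lemma pred_Dv: "Measurable.pred M (\<lambda>\<omega>. Dv j \<omega> = v)"
proof -
  have "Dv j -` {v} \<inter> space M \<in> sets M" by (rule measurable_sets[OF Dv_meas]) simp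
  moreover have "{\<omega>\<in>space M. Dv j \<omega> = v} = Dv j -` {v} \<inter> space M" by auto
  ultimately show ?thesis unfolding pred_def by simp
qed

lemma sets_Bx: "{\<omega>\<in>space M. Bx (\<lambda>m. a m \<omega>) u v} \<in> sets M"
  using pred_Bx[of u v] unfolding pred_def .

lemma AE_good: "AE \<omega> in M. (\<forall>n. (n \<in> Psi \<omega>) = T n \<omega>) \<and> (T 0 \<omega> \<longrightarrow> unb {n. T n \<omega>})"
  using AE_Psi_eq AE_unbounded_above AE_unbounded_below
  by eventually_elim (auto simp: unb_def)

lemma prob_T: "prob {\<omega>\<in>space M. T n \<omega>} = lam"
proof -
  have e: "T 0 (\<theta> n \<omega>) = T n \<omega>" if "\<omega> \<in> space M" for \<omega>
    using T_shift[OF that, where n=0 and N=n] by simp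
  have "{\<omega>\<in>space M. T n \<omega>} = {\<omega>\<in>space M. \<theta> n \<omega> \<in> {\<omega>\<in>space M. T 0 \<omega>}}"
    using e theta_space by auto
  then show ?thesis unfolding lam_def using measure_shift[OF sets_T[of 0], of n] by simp
qed

lemma prob_B: "prob {\<omega>\<in>space M. Bx (\<lambda>m. a m \<omega>) u v} = q (v - u)"
proof -
  have "Bx (\<lambda>m. a m (\<theta> u \<omega>)) 0 (v - u) = Bx (\<lambda>m. a m \<omega>) u v" if w: "\<omega> \<in> space M" for \<omega>
  proof -
    have "(\<lambda>m. a m (\<theta> u \<omega>)) = (\<lambda>m. a (m + u) \<omega>)" using a_shift[OF w] by (intro ext)
    then show ?thesis using Bx_shift[of "\<lambda>m. a m \<omega>" u 0 "v - u"] by simp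
  qed
  then have "{\<omega>\<in>space M. Bx (\<lambda>m. a m \<omega>) u v} = {\<omega>\<in>space M. \<theta> u \<omega> \<in> {\<omega>\<in>space M. Bx (\<lambda>m. a m \<omega>) 0 (v - u)}}"
    using theta_space by auto
  then show ?thesis unfolding q_def using measure_shift[OF sets_Bx[of 0 "v - u"], of u] by simp
qed

lemma block_formula:
  fixes t d :: "int \<Rightarrow> int"
  assumes lohi: "lo \<le> 0" "1 \<le> hi" and t0: "t 0 = 0" and td: "\<forall>j. t j - t (j - 1) = d j"
  shows "prob {\<omega>\<in>space M. T (t (lo - 1)) \<omega> \<and> (\<forall>j\<in>{lo..hi}. Bx (\<lambda>m. a m \<omega>) (t (j - 1)) (t j))}
         = lam * (\<Prod>j\<in>{lo..hi}. q (d j))"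
proof (cases "\<exists>j\<in>{lo..hi}. d j \<le> 0")
  case True
  then obtain j0 where j0: "j0 \<in> {lo..hi}" "d j0 \<le> 0" by blast
  have e1: "{\<omega>\<in>space M. T (t (lo - 1)) \<omega> \<and> (\<forall>j\<in>{lo..hi}. Bx (\<lambda>m. a m \<omega>) (t (j - 1)) (t j))} = {}"
  proof -
    have "\<not> Bx x (t (j0 - 1)) (t j0)" for x
      using Bx_pos[of x "t (j0 - 1)" "t j0"] td[rule_format, of j0] j0(2) by linarith
    then show ?thesis using j0(1) by blast
  qed
  have "q (d j0) = 0"
  proof -
    have e: "{\<omega>\<in>space M. Bx (\<lambda>m. a m \<omega>) 0 (d j0)} = {}" using j0(2) Bx_pos by force
    show ?thesis unfolding q_def e by simp
  qed
  then have e2: "(\<Prod>j\<in>{lo..hi}. q (d j)) = 0" using j0(1) by (intro prod_zero) auto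
  show ?thesis unfolding e1 e2 by simp
next
  case False
  then have pos: "\<forall>j\<in>{lo..hi}. 0 < d j" by auto
  have tle: "t i + int n \<le> t (i + int n)" if "lo - 1 \<le> i" "i + int n \<le> hi" for i n
    using t_mono[OF td pos that] .
  have tle': "t i \<le> t j" if "lo - 1 \<le> i" "i \<le> j" "j \<le> hi" for i j
    using tle[of i "nat (j - i)"] that by simp
  define L where "L = {lo - 1..hi}"
  define Kb where "Kb j = (if j = lo - 1 then {..< t (lo - 1)} else {t (j - 1)..< t j})" for j
  define P where "P j z = (if j = lo - 1 then Tx z (t (lo - 1)) else Bx z (t (j - 1)) (t j))" for j z
  have Kup: "Kb i \<subseteq> {..< t i}" for i unfolding Kb_def by auto
  have Klow: "Kb j \<subseteq> {t (j - 1)..}" if "j \<noteq> lo - 1" for j unfolding Kb_def using that by auto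
  have disj0: "Kb i \<inter> Kb j = {}" if "i \<in> L" "j \<in> L" "i < j" for i j
  proof -
    have "t i \<le> t (j - 1)" using tle'[of i "j - 1"] that unfolding L_def by auto
    moreover have "j \<noteq> lo - 1" using that unfolding L_def by auto
    ultimately show ?thesis using Kup[of i] Klow[of j] by fastforce
  qed
  have disj: "disjoint_family_on Kb L" unfolding disjoint_family_on_def
  proof (intro ballI impI)
    fix i j assume "i \<in> L" "j \<in> L" "i \<noteq> j"
    then show "Kb i \<inter> Kb j = {}" using disj0[of i j] disj0[of j i] by (cases "i < j") auto
  qed
  have Pm: "Measurable.pred PU (P j)" if "j \<in> L" for j
  proof (cases "j = lo - 1")
    case True
    have "Measurable.pred PU (\<lambda>z. Tx (\<lambda>m. z m) (t (lo - 1)))" by (rule pred_Tx_gen[OF comp_PU])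
    then show ?thesis unfolding P_def[abs_def] using True by simp
  next
    case False
    have "Measurable.pred PU (\<lambda>z. Bx (\<lambda>m. z m) (t (j - 1)) (t j))" by (rule pred_Bx_gen[OF comp_PU])
    then show ?thesis unfolding P_def[abs_def] using False by simp
  qed
  have Ploc: "P j (\<lambda>m. if m \<in> Kb j then a m \<omega> else 1) =
      (if j = lo - 1 then T (t (lo - 1)) \<omega> else Bx (\<lambda>m. a m \<omega>) (t (j - 1)) (t j))" for j \<omega>
  proof (cases "j = lo - 1")
    case True
    have "Tx (\<lambda>m. if m \<in> Kb j then a m \<omega> else 1) (t (lo - 1)) = T (t (lo - 1)) \<omega>"
      by (rule Tx_local) (use True in \<open>auto simp: Kb_def\<close>)
    then show ?thesis unfolding P_def using True by simp
  next
    case False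
    have "Bx (\<lambda>m. if m \<in> Kb j then a m \<omega> else 1) (t (j - 1)) (t j) = Bx (\<lambda>m. a m \<omega>) (t (j - 1)) (t j)"
      by (rule Bx_local) (use False in \<open>auto simp: Kb_def\<close>)
    then show ?thesis unfolding P_def using False by simp
  qed
  have fin: "finite L" "L \<noteq> {}" unfolding L_def using lohi by auto
  have ib: "prob {\<omega>\<in>space M. \<forall>j\<in>L. P j (\<lambda>m. if m \<in> Kb j then a m \<omega> else 1)} =
         (\<Prod>j\<in>L. prob {\<omega>\<in>space M. P j (\<lambda>m. if m \<in> Kb j then a m \<omega> else 1)})"
    by (rule indep_blocks[OF fin disj Pm])
  have Lins: "L = insert (lo - 1) {lo..hi}" "lo - 1 \<notin> {lo..hi}" unfolding L_def using lohi by auto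
  have "{\<omega>\<in>space M. \<forall>j\<in>L. P j (\<lambda>m. if m \<in> Kb j then a m \<omega> else 1)} =
        {\<omega>\<in>space M. T (t (lo - 1)) \<omega> \<and> (\<forall>j\<in>{lo..hi}. Bx (\<lambda>m. a m \<omega>) (t (j - 1)) (t j))}"
    unfolding Ploc Lins(1) using Lins(2) by auto
  moreover have "(\<Prod>j\<in>L. prob {\<omega>\<in>space M. P j (\<lambda>m. if m \<in> Kb j then a m \<omega> else 1)}) =
        lam * (\<Prod>j\<in>{lo..hi}. q (d j))"
  proof -
    have "(\<Prod>j\<in>L. prob {\<omega>\<in>space M. P j (\<lambda>m. if m \<in> Kb j then a m \<omega> else 1)}) =
          prob {\<omega>\<in>space M. T (t (lo - 1)) \<omega>} *
          (\<Prod>j\<in>{lo..hi}. prob {\<omega>\<in>space M. P j (\<lambda>m. if m \<in> Kb j then a m \<omega> else 1)})"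
      unfolding Lins(1) using Lins(2) by (simp add: Ploc)
    also have "(\<Prod>j\<in>{lo..hi}. prob {\<omega>\<in>space M. P j (\<lambda>m. if m \<in> Kb j then a m \<omega> else 1)}) =
               (\<Prod>j\<in>{lo..hi}. q (d j))"
    proof (rule prod.cong[OF refl])
      fix j assume j: "j \<in> {lo..hi}"
      then have "j \<noteq> lo - 1" by auto
      then have "prob {\<omega>\<in>space M. P j (\<lambda>m. if m \<in> Kb j then a m \<omega> else 1)} =
                 prob {\<omega>\<in>space M. Bx (\<lambda>m. a m \<omega>) (t (j - 1)) (t j)}" by (simp add: Ploc)
      also have "\<dots> = q (t j - t (j - 1))" by (rule prob_B)
      finally show "prob {\<omega>\<in>space M. P j (\<lambda>m. if m \<in> Kb j then a m \<omega> else 1)} = q (d j)"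
        using td by simp
    qed
    finally show ?thesis using prob_T by simp
  qed
  ultimately show ?thesis using ib by simp
qed

lemma palm_interval:
  assumes lohi: "lo \<le> 0" "1 \<le> hi"
  shows "prob {\<omega>\<in>space M. 0 \<in> Psi \<omega> \<and> (\<forall>j\<in>{lo..hi}. Dv j \<omega> = d j)} = lam * (\<Prod>j\<in>{lo..hi}. q (d j))"
proof -
  obtain t :: "int \<Rightarrow> int" where t0: "t 0 = 0" and td: "\<forall>j. t j - t (j - 1) = d j"
    using t_exists by blast
  have s1: "{\<omega>\<in>space M. 0 \<in> Psi \<omega> \<and> (\<forall>j\<in>{lo..hi}. Dv j \<omega> = d j)} \<in> sets M"
  proof -
    have "Measurable.pred M (\<lambda>\<omega>. 0 \<in> Psi \<omega> \<and> (\<forall>j\<in>{lo..hi}. Dv j \<omega> = d j))"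
      by (intro pred_intros_logic(3) pred_intros_finite(3) finite_atLeastAtMost_int pred_Psi pred_Dv)
    then show ?thesis unfolding pred_def .
  qed
  have s2: "{\<omega>\<in>space M. T (t (lo - 1)) \<omega> \<and> (\<forall>j\<in>{lo..hi}. Bx (\<lambda>m. a m \<omega>) (t (j - 1)) (t j))} \<in> sets M"
  proof -
    have "Measurable.pred M (\<lambda>\<omega>. T (t (lo - 1)) \<omega> \<and> (\<forall>j\<in>{lo..hi}. Bx (\<lambda>m. a m \<omega>) (t (j - 1)) (t j)))"
      by (intro pred_intros_logic(3) pred_intros_finite(3) finite_atLeastAtMost_int pred_Tx pred_Bx)
    then show ?thesis unfolding pred_def .
  qed
  have "prob {\<omega>\<in>space M. 0 \<in> Psi \<omega> \<and> (\<forall>j\<in>{lo..hi}. Dv j \<omega> = d j)} =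
        prob {\<omega>\<in>space M. T (t (lo - 1)) \<omega> \<and> (\<forall>j\<in>{lo..hi}. Bx (\<lambda>m. a m \<omega>) (t (j - 1)) (t j))}"
  proof (rule measure_eq_AE[OF _ s1 s2])
    show "AE \<omega> in M. (\<omega> \<in> {\<omega>\<in>space M. 0 \<in> Psi \<omega> \<and> (\<forall>j\<in>{lo..hi}. Dv j \<omega> = d j)}) =
                      (\<omega> \<in> {\<omega>\<in>space M. T (t (lo - 1)) \<omega> \<and> (\<forall>j\<in>{lo..hi}. Bx (\<lambda>m. a m \<omega>) (t (j - 1)) (t j))})"
      using AE_good
    proof eventually_elim
      case (elim \<omega>)
      have PS: "Psi \<omega> = {n. T n \<omega>}" using elim by auto
      have "(0 \<in> {n. T n \<omega>} \<and> (\<forall>j\<in>{lo..hi}. enum_points {n. T n \<omega>} j - enum_points {n. T n \<omega>} (j - 1) = d j)) =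
            (T (t (lo - 1)) \<omega> \<and> (\<forall>j\<in>{lo..hi}. Bx (\<lambda>m. a m \<omega>) (t (j - 1)) (t j)))"
        by (rule path_equiv[OF _ lohi t0 td]) (use elim in blast)
      moreover have "(0 \<in> Psi \<omega> \<and> (\<forall>j\<in>{lo..hi}. Dv j \<omega> = d j)) =
            (0 \<in> {n. T n \<omega>} \<and> (\<forall>j\<in>{lo..hi}. enum_points {n. T n \<omega>} j - enum_points {n. T n \<omega>} (j - 1) = d j))"
        unfolding Dv_def PS by (rule refl)
      ultimately show ?case by (simp only: mem_Collect_eq)
    qed
  qed
  also have "\<dots> = lam * (\<Prod>j\<in>{lo..hi}. q (d j))" by (rule block_formula[OF lohi t0 td])
  finally show ?thesis .
qed

end



lemma Bx_disj: "Bx x 0 v \<Longrightarrow> Bx x 0 v' \<Longrightarrow> v = v'"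
proof (rule ccontr)
  assume b: "Bx x 0 v" "Bx x 0 v'" "v \<noteq> v'"
  have *: False if b1: "Bx x 0 u" and b2: "Bx x 0 u'" and lt: "u < u'" for u u'
  proof -
    have "0 < u" using b1 Bx_pos by blast
    then obtain m where m: "0 \<le> m" "m < u" "u < m + int (x m)" using b2 lt unfolding Bx_def by blast
    then have "m + int (x m) \<le> u" using b1 unfolding Bx_def by blast
    then show False using m by simp
  qed
  show False using b *[of v v'] *[of v' v] by (cases "v < v'") auto
qed

lemma Sx_shift0: "Sx (\<lambda>m. x (m + N)) 0 = (\<lambda>m. m - N) ` Sx x N"
proof (rule set_eqI, rule iffI)
  fix m assume "m \<in> Sx (\<lambda>m. x (m + N)) 0"
  then have "m + N \<in> Sx x N" unfolding Sx_def by simp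
  then show "m \<in> (\<lambda>m. m - N) ` Sx x N" by (intro image_eqI[of _ _ "m + N"]) auto
next
  fix m assume "m \<in> (\<lambda>m. m - N) ` Sx x N"
  then show "m \<in> Sx (\<lambda>m. x (m + N)) 0" unfolding Sx_def by auto
qed

context setting
begin

definition Aset where "Aset = {\<omega>\<in>space M. 0 \<in> Psi \<omega>}"

lemma Aset_sets: "Aset \<in> sets M" unfolding Aset_def using pred_Psi[of 0] unfolding pred_def .

lemma prob_Aset: "prob Aset = lam"
  unfolding Aset_def lam_def
  by (rule measure_eq_AE) (use AE_Psi_eq pred_Psi[of 0] sets_T[of 0] in \<open>auto simp: pred_def\<close>)

definition EJ where "EJ J d = {\<omega>\<in>space M. 0 \<in> Psi \<omega> \<and> (\<forall>j\<in>J. Dv j \<omega> = d j)}"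

lemma EJ_sets: "finite J \<Longrightarrow> EJ J d \<in> sets M"
proof -
  assume J: "finite J"
  have "Measurable.pred M (\<lambda>\<omega>. 0 \<in> Psi \<omega> \<and> (\<forall>j\<in>J. Dv j \<omega> = d j))"
    by (intro pred_intros_logic(3) pred_intros_finite(3) J pred_Psi pred_Dv)
  then show ?thesis unfolding pred_def EJ_def .
qed

definition s where "s = (\<Sum>i. q (int (Suc i)))"

lemma q_nonneg: "0 \<le> q v" unfolding q_def by simp

lemma q_summable: "summable (\<lambda>i. q (int (Suc i)))"
proof -
  define B where "B i = {\<omega>\<in>space M. Bx (\<lambda>m. a m \<omega>) 0 (int (Suc i))}" for i
  have "(\<lambda>i. prob (B i)) sums prob (\<Union>i. B i)"
  proof (rule finite_measure_UNION)
    show "range B \<subseteq> sets M" unfolding B_def using sets_Bx by blast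
    show "disjoint_family B" unfolding disjoint_family_on_def B_def
      using Bx_disj by fastforce
  qed
  then show ?thesis unfolding B_def q_def by (simp add: sums_summable)
qed

lemma AE_Dv_pos: "AE \<omega> in M. 0 \<in> Psi \<omega> \<longrightarrow> (\<forall>j. 0 < Dv j \<omega>)"
  using AE_good
proof eventually_elim
  case (elim \<omega>)
  show ?case
  proof
    assume "0 \<in> Psi \<omega>"
    then have "T 0 \<omega>" using elim by blast
    then have "unb {n. T n \<omega>}" using elim by blast
    moreover have "Psi \<omega> = {n. T n \<omega>}" using elim by auto
    ultimately have "Qp (Psi \<omega>)" using unb_Qp by simp
    then obtain k where k: "strict_mono (k::int\<Rightarrow>int)" "enum_points (Psi \<omega>) = k"
      using Qp_obtain by metis
    show "\<forall>j. 0 < Dv j \<omega>" unfolding Dv_def k(2) using k(1) by (simp add: strict_mono_less)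
  qed
qed

lemma marg_step:
  assumes J: "finite J" "k \<notin> J"
    and h: "\<And>i::nat. prob (EJ (insert k J) (d(k := int (Suc i)))) = c * q (int (Suc i))"
  shows "prob (EJ J d) = c * s"
proof -
  define E where "E i = EJ (insert k J) (d(k := int (Suc i)))" for i :: nat
  have Es: "range E \<subseteq> sets M" unfolding E_def using EJ_sets J by auto
  have dis: "disjoint_family E" unfolding disjoint_family_on_def E_def EJ_def by auto
  have "(\<lambda>i. prob (E i)) sums prob (\<Union>i. E i)" by (rule finite_measure_UNION[OF Es dis])
  moreover have "prob (\<Union>i. E i) = prob (EJ J d)"
  proof (rule measure_eq_AE)
    show "(\<Union>i. E i) \<in> sets M" using Es by auto
    show "EJ J d \<in> sets M" using EJ_sets J by auto
    show "AE \<omega> in M. (\<omega> \<in> (\<Union>i. E i)) = (\<omega> \<in> EJ J d)"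
      using AE_Dv_pos
    proof eventually_elim
      case (elim \<omega>)
      show ?case
      proof
        assume "\<omega> \<in> (\<Union>i. E i)"
        then show "\<omega> \<in> EJ J d" unfolding E_def EJ_def using J(2) by (auto split: if_splits)
      next
        assume w: "\<omega> \<in> EJ J d"
        then have "0 < Dv k \<omega>" using elim unfolding EJ_def by blast
        then have "Dv k \<omega> = int (Suc (nat (Dv k \<omega> - 1)))" by simp
        then have "\<omega> \<in> E (nat (Dv k \<omega> - 1))" using w unfolding E_def EJ_def by auto
        then show "\<omega> \<in> (\<Union>i. E i)" by blast
      qed
    qed
  qed
  ultimately have s1: "(\<lambda>i. prob (E i)) sums prob (EJ J d)" by simp
  have "(\<lambda>i. prob (E i)) = (\<lambda>i. c * q (int (Suc i)))" by (rule ext) (simp only: E_def h)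
  with s1 have "(\<lambda>i. c * q (int (Suc i))) sums prob (EJ J d)" by simp
  moreover have "(\<lambda>i. c * q (int (Suc i))) sums (c * s)"
    unfolding s_def by (rule sums_mult) (rule summable_sums[OF q_summable])
  ultimately show ?thesis by (rule sums_unique2)
qed

lemma marg:
  fixes lo hi :: int
  assumes lohi: "lo \<le> 0" "1 \<le> hi"
  shows "\<forall>J d. J \<subseteq> {lo..hi} \<longrightarrow> card ({lo..hi} - J) = n \<longrightarrow>
           prob (EJ J d) = lam * (\<Prod>j\<in>J. q (d j)) * s ^ n"
proof (induction n)
  case 0
  show ?case
  proof (intro allI impI)
    fix J d assume J: "J \<subseteq> {lo..hi}" "card ({lo..hi} - J) = 0"
    then have "J = {lo..hi}" by auto
    then show "prob (EJ J d) = lam * (\<Prod>j\<in>J. q (d j)) * s ^ 0"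
      unfolding EJ_def using palm_interval[OF lohi] by simp
  qed
next
  case (Suc n)
  show ?case
  proof (intro allI impI)
    fix J d assume J: "J \<subseteq> {lo..hi}" "card ({lo..hi} - J) = Suc n"
    have "{lo..hi} - J \<noteq> {}" using J(2) by (metis card.empty nat.distinct(1))
    then obtain k where k: "k \<in> {lo..hi} - J" by blast
    have finJ: "finite J" using J(1) finite_subset by blast
    have J': "insert k J \<subseteq> {lo..hi}" using J k by auto
    have cJ': "card ({lo..hi} - insert k J) = n"
    proof -
      have "{lo..hi} - insert k J = ({lo..hi} - J) - {k}" by auto
      then show ?thesis using J(2) k by simp
    qed
    have "prob (EJ (insert k J) (d(k := int (Suc i)))) = (lam * (\<Prod>j\<in>J. q (d j)) * s ^ n) * q (int (Suc i))" for i
    proof -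
      have "prob (EJ (insert k J) (d(k := int (Suc i)))) = lam * (\<Prod>j\<in>insert k J. q ((d(k := int (Suc i))) j)) * s ^ n"
        using Suc.IH J' cJ' by blast
      also have "(\<Prod>j\<in>insert k J. q ((d(k := int (Suc i))) j)) = q (int (Suc i)) * (\<Prod>j\<in>J. q (d j))"
      proof -
        have "(\<Prod>j\<in>J. q ((d(k := int (Suc i))) j)) = (\<Prod>j\<in>J. q (d j))"
          using k by (intro prod.cong refl) auto
        then show ?thesis using k finJ by simp
      qed
      finally show ?thesis by (simp add: fun_upd_def mult_ac)
    qed
    then have "prob (EJ J d) = (lam * (\<Prod>j\<in>J. q (d j)) * s ^ n) * s"
      using k finJ by (intro marg_step) auto
    then show "prob (EJ J d) = lam * (\<Prod>j\<in>J. q (d j)) * s ^ Suc n" by simp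
  qed
qed

lemma s_one: "s = 1"
proof -
  have "prob (EJ {} (\<lambda>_. 0)) = lam * (\<Prod>j\<in>{}. q ((\<lambda>_. 0) j)) * s ^ card ({0..1::int} - {})"
    using marg[of 0 1] by simp
  moreover have "EJ {} (\<lambda>_. 0) = Aset" unfolding EJ_def Aset_def by simp
  ultimately have "lam = lam * s ^ 2" using prob_Aset by simp
  then have "s ^ 2 = 1 ^ 2" using lam_pos by simp
  moreover have "0 \<le> s" unfolding s_def by (rule suminf_nonneg[OF q_summable q_nonneg])
  ultimately show ?thesis using power_eq_iff_eq_base[of 2 s 1] by simp
qed

lemma EJ_formula:
  assumes "finite J"
  shows "prob (EJ J d) = lam * (\<Prod>j\<in>J. q (d j))"
proof -
  define B where "B = Max (insert 1 (abs ` J))"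
  have fin: "finite (insert 1 (abs ` J))" using assms by simp
  have B1: "1 \<le> B" unfolding B_def using fin by (simp add: Max_ge_iff)
  have JB: "J \<subseteq> {- B..B}"
  proof
    fix j assume "j \<in> J"
    then have "\<bar>j\<bar> \<le> B" unfolding B_def using fin by (simp add: Max_ge_iff)
    then show "j \<in> {- B..B}" by (simp add: abs_le_iff)
  qed
  have "- B \<le> 0" using B1 by simp
  then show ?thesis using marg[of "- B" B "card ({- B..B} - J)"] B1 JB s_one by simp
qed

lemma lam_ne: "emeasure M Aset \<noteq> 0" "emeasure M Aset \<noteq> \<infinity>"
  using prob_Aset lam_pos by (simp_all add: emeasure_eq_measure)

lemma palm_prob:
  assumes "finite J" "J \<noteq> {}"
  shows "measure (palm M Psi) {\<omega>\<in>space M. \<forall>j\<in>J. Dv j \<omega> = v j} = (\<Prod>j\<in>J. q (v j))"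
proof -
  have "Aset \<inter> {\<omega>\<in>space M. \<forall>j\<in>J. Dv j \<omega> = v j} = EJ J v" unfolding Aset_def EJ_def by auto
  moreover have "{\<omega>\<in>space M. \<forall>j\<in>J. Dv j \<omega> = v j} \<in> sets M"
  proof -
    have "Measurable.pred M (\<lambda>\<omega>. \<forall>j\<in>J. Dv j \<omega> = v j)"
      by (intro pred_intros_finite(3) assms(1) pred_Dv)
    then show ?thesis unfolding pred_def .
  qed
  ultimately have "measure (palm M Psi) {\<omega>\<in>space M. \<forall>j\<in>J. Dv j \<omega> = v j} = prob (EJ J v) / prob Aset"
    unfolding palm_def Aset_def[symmetric] using lam_ne by simp
  then show ?thesis using EJ_formula[OF assms(1)] prob_Aset lam_pos by simp
qed

lemma palm_single: "measure (palm M Psi) (Dv j -` {v} \<inter> space M) = q v"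
proof -
  have "Dv j -` {v} \<inter> space M = {\<omega>\<in>space M. \<forall>i\<in>{j}. Dv i \<omega> = (\<lambda>_. v) i}" by auto
  then show ?thesis using palm_prob[of "{j}" "\<lambda>_. v"] by simp
qed

end



context setting
begin

lemma palm_eq: "palm M Psi = uniform_measure M Aset"
  unfolding palm_def Aset_def by simp

lemma palm_prob_space: "prob_space (palm M Psi)"
  unfolding palm_eq by (rule prob_space_uniform_measure[OF lam_ne])

lemma sets_palm: "sets (palm M Psi) = sets M" and space_palm: "space (palm M Psi) = space M"
  unfolding palm_eq by simp_all

lemma Dv_meas_palm: "Dv j \<in> palm M Psi \<rightarrow>\<^sub>M count_space UNIV"
  using Dv_meas measurable_cong_sets[OF sets_palm refl] by blast

lemma palm_indep: "prob_space.indep_vars (palm M Psi) (\<lambda>_. count_space UNIV) Dv UNIV"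
proof -
  interpret P: prob_space "palm M Psi" by (rule palm_prob_space)
  define F where "F i = insert {} {Dv i -` {v} \<inter> space M | v. True}" for i
  have Fev: "F i \<subseteq> P.events" for i
    unfolding F_def sets_palm using measurable_sets[OF Dv_meas] by auto
  have indF: "P.indep_sets F UNIV"
    unfolding P.indep_sets_def
  proof (intro conjI ballI allI impI)
    fix i show "F i \<subseteq> P.events" by (rule Fev)
  next
    fix J :: "int set" and A assume J: "J \<subseteq> UNIV" "J \<noteq> {}" "finite J" and A: "A \<in> Pi J F"
    show "P.prob (\<Inter>j\<in>J. A j) = (\<Prod>j\<in>J. P.prob (A j))"
    proof (cases "\<exists>j\<in>J. A j = {}")
      case True
      then obtain j0 where j0: "j0 \<in> J" "A j0 = {}" by blast
      have "(\<Inter>j\<in>J. A j) = {}" using j0 by blast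
      moreover have "(\<Prod>j\<in>J. P.prob (A j)) = 0"
        using j0 J(3) by (intro prod_zero) (auto intro!: bexI[of _ j0])
      ultimately show ?thesis by simp
    next
      case False
      have "\<exists>v. A j = Dv j -` {v} \<inter> space M" if j: "j \<in> J" for j
      proof -
        have "A j \<in> F j" using A j by (simp add: Pi_iff)
        moreover have "A j \<noteq> {}" using False j by blast
        ultimately show ?thesis unfolding F_def by blast
      qed
      then have "\<forall>j\<in>J. \<exists>v. A j = Dv j -` {v} \<inter> space M" by blast
      then obtain v where v: "\<forall>j\<in>J. A j = Dv j -` {v j} \<inter> space M" by metis
      have "(\<Inter>j\<in>J. A j) = {\<omega>\<in>space M. \<forall>j\<in>J. Dv j \<omega> = v j}" using v J(2) by auto
      then have "P.prob (\<Inter>j\<in>J. A j) = (\<Prod>j\<in>J. q (v j))" using palm_prob[OF J(3,2)] by simp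
      also have "\<dots> = (\<Prod>j\<in>J. P.prob (A j))"
        using v palm_single by (intro prod.cong refl) simp
      finally show ?thesis .
    qed
  qed
  have stab: "Int_stable (F i)" for i
    unfolding Int_stable_def F_def by auto
  have sig: "P.indep_sets (\<lambda>i. sigma_sets (space M) (F i)) UNIV"
    using P.indep_sets_sigma[OF indF stab] unfolding space_palm .
  have sub: "sigma_sets (space (palm M Psi)) {Dv i -` B \<inter> space (palm M Psi) | B. B \<in> sets (count_space UNIV)}
             \<subseteq> sigma_sets (space M) (F i)" for i
    unfolding space_palm
  proof (rule sigma_sets_mono, rule subsetI)
    fix X assume "X \<in> {Dv i -` B \<inter> space M | B. B \<in> sets (count_space UNIV)}"
    then obtain B where X: "X = Dv i -` B \<inter> space M" by blast
    have "X = \<Union> ((\<lambda>v. Dv i -` {v} \<inter> space M) ` B)" unfolding X by auto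
    moreover have "\<Union> ((\<lambda>v. Dv i -` {v} \<inter> space M) ` B) \<in> sigma_sets (space M) (F i)"
      by (rule sigma_sets_UNION) (auto simp: F_def intro: sigma_sets.Basic)
    ultimately show "X \<in> sigma_sets (space M) (F i)" by simp
  qed
  show ?thesis
    unfolding P.indep_vars_def
  proof (intro conjI ballI)
    fix i show "Dv i \<in> palm M Psi \<rightarrow>\<^sub>M count_space UNIV" by (rule Dv_meas_palm)
  next
    show "P.indep_sets (\<lambda>i. sigma_sets (space (palm M Psi))
            {Dv i -` B \<inter> space (palm M Psi) | B. B \<in> sets (count_space UNIV)}) UNIV"
      by (rule P.indep_sets_mono_sets[OF sig sub])
  qed
qed

lemma palm_distr: "distr (palm M Psi) (count_space UNIV) (Dv n) = distr (palm M Psi) (count_space UNIV) (Dv 0)"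
proof -
  interpret P: prob_space "palm M Psi" by (rule palm_prob_space)
  have e: "emeasure (distr (palm M Psi) (count_space UNIV) (Dv j)) {v} = ennreal (q v)" for j v
  proof -
    have "emeasure (distr (palm M Psi) (count_space UNIV) (Dv j)) {v} = emeasure (palm M Psi) (Dv j -` {v} \<inter> space (palm M Psi))"
      by (rule emeasure_distr[OF Dv_meas_palm]) simp
    also have "\<dots> = ennreal (q v)" unfolding space_palm P.emeasure_eq_measure palm_single ..
    finally show ?thesis .
  qed
  show ?thesis
    by (rule measure_eqI_countable[where A=UNIV]) (simp_all add: e)
qed

lemma alive_shift: "\<omega> \<in> space M \<Longrightarrow> alive_count a 0 (\<theta> n \<omega>) = alive_count a n \<omega>"
proof -
  assume w: "\<omega> \<in> space M"
  have "(\<lambda>m. a m (\<theta> n \<omega>)) = (\<lambda>m. a (m + n) \<omega>)" using a_shift[OF w] by (intro ext)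
  then have "Sx (\<lambda>m. a m (\<theta> n \<omega>)) 0 = (\<lambda>m. m - n) ` Sx (\<lambda>m. a m \<omega>) n"
    using Sx_shift0[of "\<lambda>m. a m \<omega>" n] by simp
  moreover have "inj_on (\<lambda>m::int. m - n) (Sx (\<lambda>m. a m \<omega>) n)" by (auto simp: inj_on_def)
  ultimately have "card (Sx (\<lambda>m. a m (\<theta> n \<omega>)) 0) = card (Sx (\<lambda>m. a m \<omega>) n)"
    by (simp add: card_image)
  then show ?thesis unfolding alive_count_eq by simp
qed

lemma sspp_Psi: "sspp M \<theta> Psi"
  unfolding sspp_def
proof (intro conjI allI ballI)
  fix n show "{\<omega> \<in> space M. n \<in> Psi \<omega>} \<in> sets M" using pred_Psi[of n] unfolding pred_def .
next
  fix \<omega> n assume w: "\<omega> \<in> space M"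
  show "(n \<in> Psi \<omega>) = (0 \<in> Psi (\<theta> n \<omega>))" unfolding Psi_def using alive_shift[OF w, of n] by simp
next
  show "AE \<omega> in M. Psi \<omega> \<noteq> {}"
    using AE_nonempty AE_Psi_eq by eventually_elim blast
qed

lemma intensity_eq: "intensity M Psi = lam"
  unfolding intensity_def using prob_Aset unfolding Aset_def .

lemma renewal: "renewal_pp M \<theta> Psi"
proof -
  have D: "(\<lambda>n \<omega>. enum_points (Psi \<omega>) n - enum_points (Psi \<omega>) (n - 1)) = Dv"
    by (intro ext) (simp add: Dv_def)
  show ?thesis
    unfolding renewal_pp_def Let_def D
    using sspp_Psi intensity_eq lam_pos palm_indep palm_distr by simp
qed

end

theorem mainTheorem1:
  fixes M :: "'a measure" and \<theta> :: "int \<Rightarrow> 'a \<Rightarrow> 'a" and a :: "int \<Rightarrow> 'a \<Rightarrow> nat"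
  assumes "prob_space M"
    and "is_flow M \<theta>"
    and "prob_space.indep_vars M (\<lambda>_. count_space UNIV) a UNIV"
    and "\<forall>n. distr M (count_space UNIV) (a n) = distr M (count_space UNIV) (a 0)"
    and "\<forall>n. \<forall>\<omega>\<in>space M. a n \<omega> \<ge> 1"
    and "\<forall>n. \<forall>\<omega>\<in>space M. a n \<omega> = a 0 (\<theta> n \<omega>)"
    and "integrable M (\<lambda>\<omega>. real (a 0 \<omega>))"
    and "measure M {\<omega> \<in> space M. a 0 \<omega> = 1} > 0"
  shows "renewal_pp M \<theta> (\<lambda>\<omega>. {m. alive_count a m \<omega> = 1}) \<and>
         (\<lambda>i. measure M {\<omega> \<in> space M. a 0 \<omega> \<le> Suc i})
            has_prod intensity M (\<lambda>\<omega>. {m. alive_count a m \<omega> = 1}) \<and>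
         intensity M (\<lambda>\<omega>. {m. alive_count a m \<omega> = 1}) > 0"
proof -
  interpret S: setting M \<theta> a
    by (rule setting.intro[OF assms(1)], rule setting_axioms.intro) (rule assms)+
  have Psi_eq: "(\<lambda>\<omega>. {m. alive_count a m \<omega> = 1}) = S.Psi"
    by (rule ext) (simp add: S.Psi_def)
  show ?thesis
    unfolding Psi_eq S.intensity_eq
    using S.renewal S.lam_has_prod S.lam_pos by simp
qed


end
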